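(* Let $a,b>0$, $\alpha\in(0,3)$, $p>4$, and $h(x)\ge h_0>0$ on $\mathbb{Z}^3$. If $u\in H$ with $u^+\neq0$ and $u^-\neq0$, then there exists a unique pair of positive numbers $(s_u,t_u)$ such that $s_uu^++t_uu^-\in\mathcal{M}$ and $$J(s_uu^++t_uu^-)=\max_{s,t\ge0}J(su^++tu^-).$$
   Context: $\mathbb{Z}^3$ is the integer lattice graph ($x\sim y$ iff $\sum_i|x_i-y_i|=1$) with counting measure $\mu$. $|\nabla u|(x)=\big(\tfrac12\sum_{y\sim x}(u(y)-u(x))^2\big)^{1/2}$, $\int\nabla u\nabla v\,d\mu=\sum_x\tfrac12\sum_{y\sim x}(u(y)-u(x))(v(y)-v(x))$. $R_\alpha(x,y)=\frac{K_\alpha}{(2\pi)^3}\int_{\mathbb{T}^3}e^{i(x-y)\cdot k}\mu(k)^{-\alpha/2}dk$, $K_\alpha=\frac{1}{(2\pi)^3}\int_{\mathbb{T}^3}\mu(k)^{\alpha/2}dk$, $\mu(k)=6-2\sum_j\cos k_j$; $(R_\alpha\ast f)(x)=\sum_yR_\alpha(x,y)f(y)$. $H=\{u\in H^1(\mathbb{Z}^3):\sum hu^2<\infty\}$ with $\|u\|^2=\sum_x(a|\nabla u|^2+hu^2)$. $J(u)=\frac12\|u\|^2+\frac b4(\int|\nabla u|^2d\mu)^2-\frac1{2p}\int(R_\alpha\ast|u|^p)|u|^pd\mu$, $(J'(u),\phi)=\int(a\nabla u\nabla\phi+hu\phi)d\mu+b\int|\nabla u|^2d\mu\int\nabla u\nabla\phi\,d\mu-\int(R_\alpha\ast|u|^p)|u|^{p-2}u\phi\,d\mu$.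 $u^+=\max\{u,0\}$, $u^-=\min\{u,0\}$, and $\mathcal{M}=\{u\in H:u^\pm\neq0,\ (J'(u),u^+)=(J'(u),u^-)=0\}$. *)

theory Defs
  imports "HOL-Analysis.Analysis"
begin

type_synonym pt = "int \<times> int \<times> int"

definition lat_nbr :: "pt \<Rightarrow> pt \<Rightarrow> bool" where
  "lat_nbr x y \<longleftrightarrow>
     \<bar>fst x - fst y\<bar> + \<bar>fst (snd x) - fst (snd y)\<bar> + \<bar>snd (snd x) - snd (snd y)\<bar> = 1"

definition nbrs :: "pt \<Rightarrow> pt set" where
  "nbrs x = {y. lat_nbr x y}"

definition grad_sq :: "(pt \<Rightarrow> real) \<Rightarrow> pt \<Rightarrow> real" where
  "grad_sq u x = (1/2) * (\<Sum>y\<in>nbrs x. (u y - u x)^2)"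

definition grad_inner :: "(pt \<Rightarrow> real) \<Rightarrow> (pt \<Rightarrow> real) \<Rightarrow> real" where
  "grad_inner u v = (\<Sum>\<^sub>\<infinity>x. (1/2) * (\<Sum>y\<in>nbrs x. (u y - u x) * (v y - v x)))"

definition H1 :: "(pt \<Rightarrow> real) set" where
  "H1 = {u. (\<lambda>x. grad_sq u x + (u x)^2) summable_on UNIV}"

definition Hsp :: "(pt \<Rightarrow> real) \<Rightarrow> (pt \<Rightarrow> real) set" where
  "Hsp h = {u. u \<in> H1 \<and> (\<lambda>x. h x * (u x)^2) summable_on UNIV}"

definition Hnorm_sq :: "real \<Rightarrow> (pt \<Rightarrow> real) \<Rightarrow> (pt \<Rightarrow> real) \<Rightarrow> real" where
  "Hnorm_sq a h u = (\<Sum>\<^sub>\<infinity>x. a * grad_sq u x + h x * (u x)^2)"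

definition symb :: "real \<times> real \<times> real \<Rightarrow> real" where
  "symb k = 6 - 2 * (cos (fst k) + cos (fst (snd k)) + cos (snd (snd k)))"

definition torus :: "(real \<times> real \<times> real) set" where
  "torus = cbox (-pi, -pi, -pi) (pi, pi, pi)"

definition dotk :: "pt \<Rightarrow> real \<times> real \<times> real \<Rightarrow> real" where
  "dotk z k = real_of_int (fst z) * fst k + real_of_int (fst (snd z)) * fst (snd k)
              + real_of_int (snd (snd z)) * snd (snd k)"

definition K_const :: "real \<Rightarrow> real" where
  "K_const \<alpha> = (1 / (2*pi)^3) * integral torus (\<lambda>k. symb k powr (\<alpha>/2))"

text \<open>R_alpha(x,y) = K_alpha/(2pi)^3 * int_T e^{i(x-y).k} mu(k)^{-alpha/2} dk.
  The integral is complex-valued a priori; it is real by symmetry k -> -k, and we take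
  the real part.\<close>
definition R_kernel :: "real \<Rightarrow> pt \<Rightarrow> pt \<Rightarrow> real" where
  "R_kernel \<alpha> x y = Re (complex_of_real (K_const \<alpha> / (2*pi)^3) *
      integral torus (\<lambda>k. exp (\<i> * complex_of_real (dotk (x - y) k)) *
                           complex_of_real (symb k powr (-\<alpha>/2))))"

definition Rconv :: "real \<Rightarrow> (pt \<Rightarrow> real) \<Rightarrow> pt \<Rightarrow> real" where
  "Rconv \<alpha> f x = (\<Sum>\<^sub>\<infinity>y. R_kernel \<alpha> x y * f y)"

definition Jfun :: "real \<Rightarrow> real \<Rightarrow> (pt \<Rightarrow> real) \<Rightarrow> real \<Rightarrow> real \<Rightarrow> (pt \<Rightarrow> real) \<Rightarrow> real" where
  "Jfun a b h \<alpha> p u =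
     (1/2) * Hnorm_sq a h u + (b/4) * (\<Sum>\<^sub>\<infinity>x. grad_sq u x)^2
     - (1/(2*p)) * (\<Sum>\<^sub>\<infinity>x. Rconv \<alpha> (\<lambda>y. \<bar>u y\<bar> powr p) x * \<bar>u x\<bar> powr p)"

definition Jder :: "real \<Rightarrow> real \<Rightarrow> (pt \<Rightarrow> real) \<Rightarrow> real \<Rightarrow> real \<Rightarrow> (pt \<Rightarrow> real) \<Rightarrow> (pt \<Rightarrow> real) \<Rightarrow> real" where
  "Jder a b h \<alpha> p u \<phi> =
     a * grad_inner u \<phi> + (\<Sum>\<^sub>\<infinity>x. h x * u x * \<phi> x)
     + b * (\<Sum>\<^sub>\<infinity>x. grad_sq u x) * grad_inner u \<phi>
     - (\<Sum>\<^sub>\<infinity>x. Rconv \<alpha> (\<lambda>y. \<bar>u y\<bar> powr p) x * \<bar>u x\<bar> powr (p - 2) * u x * \<phi> x)"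

definition posp :: "(pt \<Rightarrow> real) \<Rightarrow> pt \<Rightarrow> real" where
  "posp u = (\<lambda>x. max (u x) 0)"

definition negp :: "(pt \<Rightarrow> real) \<Rightarrow> pt \<Rightarrow> real" where
  "negp u = (\<lambda>x. min (u x) 0)"

definition Nehari_sc :: "real \<Rightarrow> real \<Rightarrow> (pt \<Rightarrow> real) \<Rightarrow> real \<Rightarrow> real \<Rightarrow> (pt \<Rightarrow> real) set" where
  "Nehari_sc a b h \<alpha> p = {u. u \<in> Hsp h \<and> posp u \<noteq> (\<lambda>_. 0) \<and> negp u \<noteq> (\<lambda>_. 0)
      \<and> Jder a b h \<alpha> p u (posp u) = 0 \<and> Jder a b h \<alpha> p u (negp u) = 0}"

end

theory Submission
  imports Defs
begin


lemma amgm3: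
  fixes \<alpha> \<beta> u v :: real
  assumes "0 \<le> \<alpha>" "0 \<le> \<beta>" "\<alpha> + \<beta> \<le> 1" "0 < u" "0 < v"
  shows "u powr \<alpha> * v powr \<beta> \<le> \<alpha> * u + \<beta> * v + (1 - \<alpha> - \<beta>)"
proof (cases "\<alpha> + \<beta> = 0")
  case True
  then have "\<alpha> = 0" "\<beta> = 0" using assms by auto
  then show ?thesis by simp
next
  case False
  define \<gamma> where "\<gamma> = \<alpha> + \<beta>"
  have g: "0 < \<gamma>" "\<gamma> \<le> 1" using False assms by (auto simp: \<gamma>_def)
  define z where "z = (\<alpha>/\<gamma>) * u + (\<beta>/\<gamma>) * v"
  have zpos: "0 < z"
  proof -
    have "\<alpha>/\<gamma> > 0 \<or> \<beta>/\<gamma> > 0" using g assms False unfolding \<gamma>_def by (auto simp: field_simps)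
    moreover have "\<alpha>/\<gamma> \<ge> 0" "\<beta>/\<gamma> \<ge> 0" using g assms by auto
    ultimately show ?thesis unfolding z_def using assms
      by (metis add_nonneg_pos add_pos_nonneg mult_nonneg_nonneg mult_pos_pos less_eq_real_def)
  qed
  have y1: "u powr (\<alpha>/\<gamma>) * v powr (\<beta>/\<gamma>) \<le> z"
    unfolding z_def using assms g
    by (intro Youngs_inequality_0) (auto simp: \<gamma>_def add_divide_distrib[symmetric])
  have eq: "u powr \<alpha> * v powr \<beta> = (u powr (\<alpha>/\<gamma>) * v powr (\<beta>/\<gamma>)) powr \<gamma>"
    using g assms by (simp add: powr_mult powr_powr)
  have "(u powr (\<alpha>/\<gamma>) * v powr (\<beta>/\<gamma>)) powr \<gamma> \<le> z powr \<gamma>"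
    using y1 g by (intro powr_mono2) auto
  also have "z powr \<gamma> = z powr \<gamma> * 1 powr (1 - \<gamma>)" by simp
  also have "\<dots> \<le> \<gamma> * z + (1 - \<gamma>) * 1"
    using g zpos by (intro Youngs_inequality_0) auto
  also have "\<gamma> * z = \<alpha> * u + \<beta> * v" unfolding z_def using g by (simp add: field_simps)
  finally show ?thesis using eq by (simp add: \<gamma>_def)
qed

lemma mono_concave:
  fixes \<alpha> \<beta> X1 X2 Y1 Y2 :: real
  assumes "0 \<le> \<alpha>" "0 \<le> \<beta>" "\<alpha> + \<beta> \<le> 1" "0 < X1" "0 < X2" "0 < Y1" "0 < Y2"
  shows "X1 powr \<alpha> * Y1 powr \<beta> + X2 powr \<alpha> * Y2 powr \<beta>
         \<le> 2 * (((X1+X2)/2) powr \<alpha> * ((Y1+Y2)/2) powr \<beta>)"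
proof -
  define M where "M = (X1+X2)/2"
  define N where "N = (Y1+Y2)/2"
  have MN: "0 < M" "0 < N" using assms by (auto simp: M_def N_def)
  have e1: "X powr \<alpha> * Y powr \<beta> = (M powr \<alpha> * N powr \<beta>) * ((X/M) powr \<alpha> * (Y/N) powr \<beta>)"
    if "X > 0" "Y > 0" for X Y
    using MN that by (simp add: powr_divide)
  have i1: "(X1/M) powr \<alpha> * (Y1/N) powr \<beta> \<le> \<alpha> * (X1/M) + \<beta> * (Y1/N) + (1 - \<alpha> - \<beta>)"
    using assms MN by (intro amgm3) auto
  have i2: "(X2/M) powr \<alpha> * (Y2/N) powr \<beta> \<le> \<alpha> * (X2/M) + \<beta> * (Y2/N) + (1 - \<alpha> - \<beta>)"
    using assms MN by (intro amgm3) auto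
  have xm: "X1/M + X2/M = 2" using MN unfolding M_def by (simp add: field_simps add_divide_distrib[symmetric])
  have yn: "Y1/N + Y2/N = 2" using MN unfolding N_def by (simp add: field_simps add_divide_distrib[symmetric])
  have s: "\<alpha> * (X1/M) + \<beta> * (Y1/N) + (1 - \<alpha> - \<beta>) + (\<alpha> * (X2/M) + \<beta> * (Y2/N) + (1 - \<alpha> - \<beta>)) = 2"
  proof -
    have "\<alpha> * (X1/M) + \<alpha> * (X2/M) = \<alpha> * 2" using xm by (metis distrib_left)
    moreover have "\<beta> * (Y1/N) + \<beta> * (Y2/N) = \<beta> * 2" using yn by (metis distrib_left)
    ultimately show ?thesis by linarith
  qed
  have pos: "0 \<le> M powr \<alpha> * N powr \<beta>" by simp
  have "X1 powr \<alpha> * Y1 powr \<beta> + X2 powr \<alpha> * Y2 powr \<beta>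
     = (M powr \<alpha> * N powr \<beta>) * ((X1/M) powr \<alpha> * (Y1/N) powr \<beta> + (X2/M) powr \<alpha> * (Y2/N) powr \<beta>)"
    using e1[of X1 Y1] e1[of X2 Y2] assms by (simp add: algebra_simps)
  also have "\<dots> \<le> (M powr \<alpha> * N powr \<beta>) * 2"
    using i1 i2 s pos by (intro mult_left_mono) auto
  finally show ?thesis by (simp add: M_def N_def mult.commute)
qed

lemma bern_strict:
  fixes q a :: real
  assumes "0 < q" "q < 1" "0 \<le> a" "a \<noteq> 1"
  shows "a powr q < 1 + q * (a - 1)"
proof (cases "a = 0")
  case True then show ?thesis using assms by simp
next
  case False
  define c where "c = sqrt a"
  have c: "0 < c" "c \<noteq> 1" "c * c = a" using assms False by (auto simp: c_def)
  have "a powr q = (c powr q) * (c powr q)"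
    using c by (metis powr_mult)
  have y: "c powr q \<le> q * c + (1 - q)"
    using Youngs_inequality_0[of q "1-q" c 1] c assms by simp
  have "c powr q \<ge> 0" by simp
  have "q * c \<ge> 0" using assms c by simp
  then have "(c powr q) * (c powr q) \<le> (q * c + (1 - q)) * (q * c + (1 - q))"
    using y assms by (intro mult_mono) auto
  also have "\<dots> < 1 + q * (a - 1)"
  proof -
    have "0 < (c - 1) * (c - 1)" using c(2) by (cases "c > 1") (auto intro: mult_pos_pos mult_neg_neg)
    then have "0 < q * (1 - q) * ((c - 1) * (c - 1))" using assms by (metis diff_gt_0_iff_gt mult_pos_pos)
    then show ?thesis unfolding c(3)[symmetric] by (simp add: algebra_simps)
  qed
  finally show ?thesis using \<open>a powr q = _\<close> by simp
qed

lemma powr_mid_strict: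
  fixes q x y :: real
  assumes "0 < q" "q < 1" "0 \<le> x" "0 \<le> y" "x \<noteq> y"
  shows "x powr q + y powr q < 2 * ((x + y)/2) powr q"
proof -
  define m where "m = (x+y)/2"
  have m: "0 < m" using assms by (auto simp: m_def)
  have e: "z powr q = m powr q * (z/m) powr q" if "z \<ge> 0" for z
    using m that by (simp add: powr_divide)
  have "x/m \<noteq> 1" using assms m by (auto simp: m_def field_simps)
  then have i1: "(x/m) powr q < 1 + q * (x/m - 1)" using assms m by (intro bern_strict) auto
  have "y/m \<noteq> 1" using assms m by (auto simp: m_def field_simps)
  then have i2: "(y/m) powr q < 1 + q * (y/m - 1)" using assms m by (intro bern_strict) auto
  have xm: "x/m + y/m = 2" using m unfolding m_def by (simp add: field_simps add_divide_distrib[symmetric])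
  have s: "1 + q * (x/m - 1) + (1 + q * (y/m - 1)) = 2"
  proof -
    have "q * (x/m) + q * (y/m) = q * 2" using xm by (metis distrib_left)
    then show ?thesis by (simp add: algebra_simps)
  qed
  have mp: "0 < m powr q" using m by simp
  have "x powr q + y powr q = m powr q * ((x/m) powr q + (y/m) powr q)"
    using e[of x] e[of y] assms by (simp add: algebra_simps)
  also have "\<dots> < m powr q * 2"
    using i1 i2 s mp by (intro mult_strict_left_mono) auto
  finally show ?thesis by (simp add: m_def mult.commute)
qed


definition GG :: "real \<Rightarrow> real \<Rightarrow> real \<Rightarrow> real \<Rightarrow> real \<Rightarrow> real" where
  "GG g1 g12 g2 s t = g1 * s^2 + 2 * g12 * (s * t) + g2 * t^2"

definition ff :: "real \<Rightarrow> real \<Rightarrow> real \<Rightarrow> real \<Rightarrow> real \<Rightarrow> real \<Rightarrow> real \<Rightarrow> real \<Rightarrow> real \<Rightarrow> real \<Rightarrow> real \<Rightarrow> real \<Rightarrow> real \<Rightarrow> real" where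
  "ff a b p g1 g12 g2 Q1 Q2 A C D s t =
     (1/2) * (a * GG g1 g12 g2 s t + Q1 * s^2 + Q2 * t^2) + (b/4) * (GG g1 g12 g2 s t)^2
     - (1/(2*p)) * (A * (s powr p)^2 + 2 * C * (s powr p * t powr p) + D * (t powr p)^2)"

definition EE :: "real \<Rightarrow> real \<Rightarrow> real \<Rightarrow> real \<Rightarrow> real \<Rightarrow> real \<Rightarrow> real \<Rightarrow> real \<Rightarrow> real \<Rightarrow> real \<Rightarrow> real \<Rightarrow> real \<Rightarrow> real \<Rightarrow> real" where
  "EE a b p g1 g12 g2 Q1 Q2 A C D s t =
     a * (g1 * s^2 + g12 * (s * t)) + Q1 * s^2 + b * GG g1 g12 g2 s t * (g1 * s^2 + g12 * (s * t))
     - (A * (s powr p)^2 + C * (s powr p * t powr p))"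

lemma GG_swap: "GG g1 g12 g2 s t = GG g2 g12 g1 t s"
  unfolding GG_def by (simp add: algebra_simps)

lemma ff_swap: "ff a b p g1 g12 g2 Q1 Q2 A C D s t = ff a b p g2 g12 g1 Q2 Q1 D C A t s"
  unfolding ff_def GG_swap[of g1 g12 g2 s t] by (simp add: algebra_simps)

locale twoD =
  fixes a b p g1 g12 g2 Q1 Q2 A C D :: real
  assumes a: "a > 0" and b: "b > 0" and p: "p > 4" and g1: "g1 \<ge> 0" and g12: "g12 \<ge> 0"
    and g2: "g2 \<ge> 0" and Q1: "Q1 > 0" and Q2: "Q2 > 0" and A: "A > 0" and D: "D > 0"
    and ACD: "C * C < A * D"
begin

abbreviation "G \<equiv> GG g1 g12 g2"
abbreviation "f \<equiv> ff a b p g1 g12 g2 Q1 Q2 A C D"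
abbreviation "E \<equiv> EE a b p g1 g12 g2 Q1 Q2 A C D"

lemma swapped: "twoD a b p g2 g12 g1 Q2 Q1 D C A"
  using a b p g1 g12 g2 Q1 Q2 A D ACD by unfold_locales (auto simp: mult.commute)

definition "lam = (A * D - C * C) / (A + D)"

lemma lam_pos: "lam > 0" unfolding lam_def using ACD A D by simp

lemma qlow: "A * X^2 + 2 * C * (X * Y) + D * Y^2 \<ge> lam * (X^2 + Y^2)"
proof -
  have "(A + D) * (A * X^2 + 2 * C * (X * Y) + D * Y^2 - lam * (X^2 + Y^2))
        = (A * X + C * Y)^2 + (C * X + D * Y)^2"
    unfolding lam_def using A D by (simp add: field_simps power2_eq_square)
  also have "\<dots> \<ge> 0" by simp
  finally have "0 \<le> (A + D) * (A * X^2 + 2 * C * (X * Y) + D * Y^2 - lam * (X^2 + Y^2))" .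
  then show ?thesis using A D by (simp add: zero_le_mult_iff)
qed

lemma qpsd: "A * X^2 + 2 * C * (X * Y) + D * Y^2 \<ge> 0"
proof -
  have "lam * (X^2+Y^2) \<ge> 0" using lam_pos by simp
  then show ?thesis using qlow[of X Y] by linarith
qed

lemma G_nonneg: "0 \<le> s \<Longrightarrow> 0 \<le> t \<Longrightarrow> 0 \<le> G s t"
  unfolding GG_def using g1 g12 g2 by simp

lemma f00: "f 0 0 = 0"
  unfolding ff_def GG_def using p by simp

lemma coercive: "\<exists>R\<ge>1. \<forall>s t. 0 \<le> s \<longrightarrow> 0 \<le> t \<longrightarrow> (s > R \<or> t > R) \<longrightarrow> f s t < 0"
proof -
  define gs where "gs = g1 + 2 * g12 + g2"
  have gs: "gs \<ge> 0" using g1 g2 g12 by (simp add: gs_def)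
  define c1 where "c1 = (1/2) * (a * gs + Q1 + Q2)"
  define c2 where "c2 = (b/4) * gs^2"
  have "a * gs \<ge> 0" using a gs by simp
  then have c1: "c1 > 0" using Q1 Q2 by (simp add: c1_def)
  have c2: "c2 \<ge> 0" using b by (simp add: c2_def)
  define K where "K = 2 * p * (c1 + c2) / lam"
  have K: "K > 0" using c1 c2 p lam_pos by (simp add: K_def)
  define R where "R = max 1 (K powr (1 / (2*p - 4)))"
  have R1: "R \<ge> 1" by (simp add: R_def)
  have RK: "R powr (2*p - 4) \<ge> K"
  proof -
    have "K = (K powr (1 / (2*p - 4))) powr (2*p - 4)"
      using K p by (simp add: powr_powr)
    also have "\<dots> \<le> R powr (2*p - 4)"
      using p by (intro powr_mono2) (auto simp: R_def)
    finally show ?thesis .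
  qed
  have "f s t < 0" if st: "0 \<le> s" "0 \<le> t" "s > R \<or> t > R" for s t
  proof -
    define m where "m = max s t"
    have m: "m > R" "m > 1" "s \<le> m" "t \<le> m" using st R1 by (auto simp: m_def)
    have m0: "m > 0" using m by simp
    have ss: "s^2 \<le> m^2" "t^2 \<le> m^2" "s * t \<le> m^2"
      using st m by (auto intro: power_mono simp: power2_eq_square intro!: mult_mono)
    have Gle: "G s t \<le> gs * m^2"
    proof -
      have "g1 * s^2 \<le> g1 * m^2" "g12 * (s*t) \<le> g12 * m^2" "g2 * t^2 \<le> g2 * m^2"
        using ss g1 g2 g12 by (auto intro: mult_left_mono)
      then show ?thesis unfolding GG_def gs_def by (simp add: algebra_simps)
    qed
    have G0: "0 \<le> G s t" using G_nonneg st by simp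
    have G2: "(G s t)^2 \<le> gs^2 * m^4"
    proof -
      have "(G s t)^2 \<le> (gs * m^2)^2" using Gle G0 by (intro power_mono) auto
      then show ?thesis by (simp add: power_mult_distrib power2_eq_square[of "m^2"] flip: power_add)
    qed
    have m24: "m^2 \<le> m^4" using m by (simp add: power_increasing)
    have pos: "(1/2) * (a * G s t + Q1 * s^2 + Q2 * t^2) + (b/4) * (G s t)^2 \<le> (c1 + c2) * m^4"
    proof -
      have "a * G s t \<le> a * (gs * m^2)" using Gle a by simp
      moreover have "Q1 * s^2 \<le> Q1 * m^2" "Q2 * t^2 \<le> Q2 * m^2" using ss Q1 Q2 by auto
      moreover have "(b/4) * (G s t)^2 \<le> (b/4) * (gs^2 * m^4)" using G2 b by simp
      ultimately have "(1/2) * (a * G s t + Q1 * s^2 + Q2 * t^2) + (b/4) * (G s t)^2 \<le>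
          (1/2) * (a * (gs * m^2) + Q1 * m^2 + Q2 * m^2) + (b/4) * (gs^2 * m^4)"
      proof -
        assume h: "a * G s t \<le> a * (gs * m^2)" "Q1 * s^2 \<le> Q1 * m^2" "Q2 * t^2 \<le> Q2 * m^2"
           "(b/4) * (G s t)^2 \<le> (b/4) * (gs^2 * m^4)"
        have "a * G s t + Q1 * s^2 + Q2 * t^2 \<le> a * (gs * m^2) + Q1 * m^2 + Q2 * m^2"
          using h(1-3) by linarith
        then have "(1/2) * (a * G s t + Q1 * s^2 + Q2 * t^2) \<le> (1/2) * (a * (gs * m^2) + Q1 * m^2 + Q2 * m^2)"
          by simp
        then show ?thesis using h(4) by linarith
      qed
      also have "\<dots> = c1 * m^2 + c2 * m^4" unfolding c1_def c2_def by (simp add: algebra_simps)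
      also have "\<dots> \<le> c1 * m^4 + c2 * m^4" using m24 c1 by simp
      finally show ?thesis by (simp add: algebra_simps)
    qed
    have mp: "(m powr p)^2 \<le> (s powr p)^2 + (t powr p)^2"
      by (cases "s \<le> t") (auto simp: m_def max_def)
    have "lam * (m powr p)^2 \<le> lam * ((s powr p)^2 + (t powr p)^2)"
      using mp lam_pos by (simp add: mult_left_mono)
    then have lq: "lam * (m powr p)^2 \<le> A * (s powr p)^2 + 2 * C * (s powr p * t powr p) + D * (t powr p)^2"
      using qlow[of "s powr p" "t powr p"] by linarith
    moreover have "(m powr p)^2 = m^4 * m powr (2*p - 4)"
    proof -
      have "(m powr p)^2 = m powr (2*p)" using m0 by (simp add: powr_powr[symmetric] power2_eq_square powr_add[symmetric])
      also have "\<dots> = m powr 4 * m powr (2*p - 4)" using powr_add[of m 4 "2*p-4"] by simp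
      also have "m powr 4 = m^4" using m0 by (simp add: powr_numeral)
      finally show ?thesis .
    qed
    moreover have "m powr (2*p - 4) > K"
    proof -
      have "R powr (2*p - 4) < m powr (2*p - 4)"
        using m R1 p by (intro powr_less_mono2) auto
      then show ?thesis using RK by simp
    qed
    ultimately have neg: "lam * (m^4 * K) < A * (s powr p)^2 + 2 * C * (s powr p * t powr p) + D * (t powr p)^2"
    proof -
      have "m^4 * K < m^4 * m powr (2*p - 4)" using m0 \<open>m powr (2*p - 4) > K\<close> by simp
      then have "lam * (m^4 * K) < lam * (m^4 * m powr (2*p - 4))" using lam_pos by simp
      then show ?thesis using lq \<open>(m powr p)^2 = _\<close> by simp
    qed
    have "lam * (m^4 * K) = 2 * p * ((c1 + c2) * m^4)"
      unfolding K_def using lam_pos by (simp add: field_simps)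
    then have "(c1 + c2) * m^4 < (1/(2*p)) * (A * (s powr p)^2 + 2 * C * (s powr p * t powr p) + D * (t powr p)^2)"
      using neg p by (simp add: field_simps)
    then show ?thesis using pos unfolding ff_def by linarith
  qed
  then show ?thesis using R1 by blast
qed

lemma f_cont: "continuous_on S (\<lambda>z. f (fst z) (snd z))" if "\<forall>z\<in>S. fst z \<ge> 0 \<and> snd z \<ge> 0"
proof -
  have c1: "continuous_on S (\<lambda>z. fst z powr p)"
    by (rule continuous_on_powr'[OF continuous_on_fst[OF continuous_on_id] continuous_on_const]) (use that p in auto)
  have c2: "continuous_on S (\<lambda>z. snd z powr p)"
    by (rule continuous_on_powr'[OF continuous_on_snd[OF continuous_on_id] continuous_on_const]) (use that p in auto)
  show ?thesis unfolding ff_def GG_def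
    by (intro continuous_on_add continuous_on_diff continuous_on_mult continuous_on_power c1 c2
        continuous_on_const continuous_on_fst continuous_on_snd continuous_on_id)
qed

lemma exists_max: "\<exists>s0 t0. 0 \<le> s0 \<and> 0 \<le> t0 \<and> (\<forall>s t. 0 \<le> s \<longrightarrow> 0 \<le> t \<longrightarrow> f s t \<le> f s0 t0)"
proof -
  obtain R where R: "R \<ge> 1" "\<And>s t. 0 \<le> s \<Longrightarrow> 0 \<le> t \<Longrightarrow> (s > R \<or> t > R) \<Longrightarrow> f s t < 0"
    using coercive by blast
  let ?S = "cbox (0::real, 0::real) (R, R)"
  have Sm: "z \<in> ?S \<longleftrightarrow> 0 \<le> fst z \<and> fst z \<le> R \<and> 0 \<le> snd z \<and> snd z \<le> R" for z
    by (cases z) (auto simp: cbox_Pair_iff)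
  have "(0,0) \<in> ?S" using R Sm[of "(0,0)"] by simp
  then have S: "compact ?S" "?S \<noteq> {}" by (simp, blast)
  have "continuous_on ?S (\<lambda>z. f (fst z) (snd z))" using Sm by (intro f_cont) auto
  then obtain z0 where z0: "z0 \<in> ?S" "\<And>y. y \<in> ?S \<Longrightarrow> f (fst y) (snd y) \<le> f (fst z0) (snd z0)"
    using continuous_attains_sup[OF S] by blast
  have "0 \<le> f (fst z0) (snd z0)" using z0(2)[of "(0,0)"] R f00 by (auto simp: Sm)
  have "f s t \<le> f (fst z0) (snd z0)" if "0 \<le> s" "0 \<le> t" for s t
  proof (cases "s \<le> R \<and> t \<le> R")
    case True then show ?thesis using z0(2)[of "(s,t)"] that by (auto simp: Sm)
  next
    case False then show ?thesis using R(2)[OF that] \<open>0 \<le> f _ _\<close> by force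
  qed
  then show ?thesis using z0(1) Sm by blast
qed

end



lemma powr_pow_p:
  fixes p s :: real and i :: nat
  assumes "p > 0" "s > 0"
  shows "(s powr p) powr (real i / p) = s ^ i"
  using assms by (simp add: powr_powr powr_realpow)

lemma mid_pow:
  fixes p M :: real and i :: nat
  assumes "p > 0" "M > 0"
  shows "(M powr (1/p)) ^ i = M powr (real i / p)"
proof -
  have "(M powr (1/p)) ^ i = (M powr (1/p)) powr (real i)" using assms by (simp add: powr_realpow)
  also have "\<dots> = M powr (real i / p)" by (simp add: powr_powr)
  finally show ?thesis .
qed

lemma mono_nat:
  fixes p s1 s2 t1 t2 :: real and i j :: nat
  assumes p: "p > 0" and ij: "real i + real j \<le> p" and pos: "s1 > 0" "s2 > 0" "t1 > 0" "t2 > 0"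
  shows "s1^i * t1^j + s2^i * t2^j
     \<le> 2 * ((((s1 powr p + s2 powr p)/2) powr (1/p))^i * (((t1 powr p + t2 powr p)/2) powr (1/p))^j)"
proof -
  have M: "(s1 powr p + s2 powr p)/2 > 0" "(t1 powr p + t2 powr p)/2 > 0" using pos by (simp_all add: add_pos_pos)
  have "real i / p + real j / p \<le> 1" using ij p by (simp add: add_divide_distrib[symmetric])
  then have "(s1 powr p) powr (real i / p) * (t1 powr p) powr (real j / p)
      + (s2 powr p) powr (real i / p) * (t2 powr p) powr (real j / p)
      \<le> 2 * (((s1 powr p + s2 powr p)/2) powr (real i / p) * ((t1 powr p + t2 powr p)/2) powr (real j / p))"
    using p pos by (intro mono_concave) auto
  then show ?thesis using p pos M by (simp only: powr_pow_p mid_pow)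
qed

lemma mid_strict:
  fixes p s1 s2 :: real
  assumes p: "p > 2" and pos: "s1 > 0" "s2 > 0" and ne: "s1 \<noteq> s2"
  shows "s1^2 + s2^2 < 2 * (((s1 powr p + s2 powr p)/2) powr (1/p))^2"
proof -
  have M: "(s1 powr p + s2 powr p)/2 > 0" using pos by (simp add: add_pos_pos)
  have "s1 powr p \<noteq> s2 powr p"
  proof
    assume "s1 powr p = s2 powr p"
    then have "(s1 powr p) powr (1/p) = (s2 powr p) powr (1/p)" by simp
    then show False using ne pos p by (simp add: powr_powr)
  qed
  then have "(s1 powr p) powr (real 2 / p) + (s2 powr p) powr (real 2 / p)
       < 2 * (((s1 powr p + s2 powr p)/2) powr (real 2 / p))"
    using p pos by (intro powr_mid_strict) auto
  then show ?thesis using p pos M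
    by (simp only: powr_pow_p[of p, where i=2] mid_pow[of p, where i=2])
qed

context twoD begin

lemma bump: assumes s0: "0 \<le> s0" shows "\<exists>\<tau>>0. f s0 0 < f s0 \<tau>"
proof -
  define K where "K = (2 * \<bar>C\<bar> * (s0 powr p) + D) / (2 * p)"
  have K: "K > 0" unfolding K_def using D p by (simp add: add_nonneg_pos)
  define \<tau> where "\<tau> = min (1/2) (Q2 / (4 * K))"
  have \<tau>: "0 < \<tau>" "\<tau> \<le> 1" "K * \<tau> \<le> Q2 / 4" using K Q2
    by (auto simp: \<tau>_def min_def field_simps)
  have tp3: "\<tau> powr p \<le> \<tau>^3"
  proof -
    have "\<tau> powr p \<le> \<tau> powr 3" using \<tau> p by (intro powr_mono') auto
    also have "\<tau> powr 3 = \<tau>^3" using \<tau> by (simp add: powr_numeral)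
    finally show ?thesis .
  qed
  have "\<tau>^3 \<le> 1" using \<tau> by (simp add: power_le_one)
  then have tp1: "\<tau> powr p \<le> 1" using tp3 by linarith
  have tpp: "(\<tau> powr p)^2 \<le> \<tau>^3"
  proof -
    have "(\<tau> powr p)^2 \<le> \<tau> powr p * 1" unfolding power2_eq_square using tp1
      by (intro mult_left_mono) auto
    then show ?thesis using tp3 by simp
  qed
  have Gm: "G s0 0 \<le> G s0 \<tau>" "0 \<le> G s0 0"
    unfolding GG_def using g1 g12 g2 s0 \<tau> by auto
  then have Gsq: "(G s0 0)^2 \<le> (G s0 \<tau>)^2" by (intro power_mono) auto
  have cterm: "2 * C * (s0 powr p * \<tau> powr p) \<le> 2 * \<bar>C\<bar> * (s0 powr p) * \<tau>^3"
  proof -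
    have "2 * C * (s0 powr p * \<tau> powr p) \<le> 2 * \<bar>C\<bar> * (s0 powr p) * \<tau> powr p"
      by (simp add: mult_right_mono)
    also have "\<dots> \<le> 2 * \<bar>C\<bar> * (s0 powr p) * \<tau>^3" using tp3 by (intro mult_left_mono) auto
    finally show ?thesis .
  qed
  have dterm: "D * (\<tau> powr p)^2 \<le> D * \<tau>^3" using tpp D by simp
  have nl: "(1/(2*p)) * (A * (s0 powr p)^2 + 2 * C * (s0 powr p * \<tau> powr p) + D * (\<tau> powr p)^2)
        \<le> (1/(2*p)) * (A * (s0 powr p)^2) + K * \<tau>^3"
  proof -
    have "A * (s0 powr p)^2 + 2 * C * (s0 powr p * \<tau> powr p) + D * (\<tau> powr p)^2
          \<le> A * (s0 powr p)^2 + (2 * \<bar>C\<bar> * (s0 powr p) + D) * \<tau>^3"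
      using cterm dterm by (simp add: algebra_simps)
    then have "(1/(2*p)) * (A * (s0 powr p)^2 + 2 * C * (s0 powr p * \<tau> powr p) + D * (\<tau> powr p)^2)
          \<le> (1/(2*p)) * (A * (s0 powr p)^2 + (2 * \<bar>C\<bar> * (s0 powr p) + D) * \<tau>^3)"
      using p by (intro mult_left_mono) auto
    also have "(1/(2*p)) * (A * (s0 powr p)^2 + (2 * \<bar>C\<bar> * (s0 powr p) + D) * \<tau>^3)
       = (1/(2*p)) * (A * (s0 powr p)^2) + K * \<tau>^3" unfolding K_def using p by (simp add: field_simps)
    finally show ?thesis .
  qed
  have Kt: "K * \<tau>^3 \<le> (Q2/4) * \<tau>^2"
  proof -
    have "K * \<tau>^3 = (K * \<tau>) * \<tau>^2" by (simp add: power2_eq_square power3_eq_cube)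
    also have "\<dots> \<le> (Q2/4) * \<tau>^2" using \<tau> by (intro mult_right_mono) auto
    finally show ?thesis .
  qed
  have pos: "0 < (Q2/4) * \<tau>^2" using Q2 \<tau> by simp
  have "a * G s0 0 \<le> a * G s0 \<tau>" using Gm a by simp
  moreover have "(b/4) * (G s0 0)^2 \<le> (b/4) * (G s0 \<tau>)^2" using Gsq b by simp
  moreover have "0 powr p = (0::real)" by simp
  ultimately have "f s0 0 < f s0 \<tau>"
    unfolding ff_def using nl Kt pos by (simp add: algebra_simps)
  then show ?thesis using \<tau> by blast
qed

lemma nehari_s:
  assumes s0: "0 < s0" and t0: "0 \<le> t0" and mx: "\<forall>s t. 0 \<le> s \<longrightarrow> 0 \<le> t \<longrightarrow> f s t \<le> f s0 t0"
  shows "E s0 t0 = 0"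
proof -
  define \<phi> where "\<phi> r = (1/2) * (a * (g1 * (r * s0)^2 + 2 * g12 * ((r * s0) * t0) + g2 * t0^2) + Q1 * (r * s0)^2 + Q2 * t0^2)
     + (b/4) * (g1 * (r * s0)^2 + 2 * g12 * ((r * s0) * t0) + g2 * t0^2)^2
     - (1/(2*p)) * (A * (r powr p * s0 powr p)^2 + 2 * C * ((r powr p * s0 powr p) * t0 powr p) + D * (t0 powr p)^2)" for r
  have phif: "\<phi> r = f (r * s0) t0" if "r > 0" for r
    unfolding \<phi>_def ff_def GG_def using that s0 by (simp add: powr_mult)
  have d: "(\<phi> has_real_derivative E s0 t0) (at 1)"
    unfolding \<phi>_def EE_def GG_def
    apply (rule derivative_eq_intros has_real_derivative_powr refl | simp)+
    using p apply (simp add: field_simps power2_eq_square)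
    done
  have "E s0 t0 = 0"
  proof (rule DERIV_local_max[OF d, of 1])
    show "\<forall>y. \<bar>1 - y\<bar> < 1 \<longrightarrow> \<phi> y \<le> \<phi> 1"
    proof (intro allI impI)
      fix y :: real assume "\<bar>1 - y\<bar> < 1"
      then have y: "y > 0" by simp
      show "\<phi> y \<le> \<phi> 1" using phif[OF y] phif[of 1] mx s0 t0 y by simp
    qed
  qed simp
  then show ?thesis .
qed

lemma f_expand: "f s t = (1/2) * ((a*g1+Q1) * (s^2 * t^0) + 2 * (a*g12) * (s^1 * t^1) + (a*g2+Q2) * (s^0 * t^2))
   + (b/4) * (g1^2 * (s^4 * t^0) + 4*g1*g12 * (s^3 * t^1) + (4*g12^2 + 2*g1*g2) * (s^2 * t^2)
              + 4*g2*g12 * (s^1 * t^3) + g2^2 * (s^0 * t^4))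
   - (1/(2*p)) * (A * (s powr p)^2 + 2 * C * (s powr p * t powr p) + D * (t powr p)^2)"
  unfolding ff_def GG_def by (simp add: algebra_simps power2_eq_square power3_eq_cube power4_eq_xxxx)

lemma unique_max:
  assumes pos: "s1 > 0" "t1 > 0" "s2 > 0" "t2 > 0"
    and m1: "\<forall>s t. 0 \<le> s \<longrightarrow> 0 \<le> t \<longrightarrow> f s t \<le> f s1 t1"
    and m2: "\<forall>s t. 0 \<le> s \<longrightarrow> 0 \<le> t \<longrightarrow> f s t \<le> f s2 t2"
  shows "s1 = s2 \<and> t1 = t2"
proof (rule ccontr)
  assume ne: "\<not> (s1 = s2 \<and> t1 = t2)"
  define X1 where "X1 = s1 powr p"
  define X2 where "X2 = s2 powr p"
  define Y1 where "Y1 = t1 powr p"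
  define Y2 where "Y2 = t2 powr p"
  define sm where "sm = ((s1 powr p + s2 powr p)/2) powr (1/p)"
  define tm where "tm = ((t1 powr p + t2 powr p)/2) powr (1/p)"
  have "(s1 powr p + s2 powr p)/2 > 0" "(t1 powr p + t2 powr p)/2 > 0" using pos by (simp_all add: add_pos_pos)
  then have smp: "sm > 0" "tm > 0" by (auto simp: sm_def tm_def)
  have smX: "sm powr p = (X1 + X2)/2" "tm powr p = (Y1 + Y2)/2"
    using pos p by (auto simp: sm_def tm_def X1_def X2_def Y1_def Y2_def powr_powr)
  have p0: "p > 0" using p by simp
  define d where "d i j = 2 * (sm^i * tm^j) - (s1^i * t1^j + s2^i * t2^j)" for i j :: nat
  have dn: "d i j \<ge> 0" if "i + j \<le> 4" for i j
  proof -
    have "real i + real j \<le> p" using that p by linarith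
    then show ?thesis unfolding d_def sm_def tm_def using mono_nat[OF p0 _ pos(1,3,2,4)] by simp
  qed
  have ds: "d 2 0 > 0" if "s1 \<noteq> s2"
    using mid_strict[of p s1 s2] p pos that unfolding d_def sm_def by simp
  have dt: "d 0 2 > 0" if "t1 \<noteq> t2"
    using mid_strict[of p t1 t2] p pos that unfolding d_def tm_def by simp
  define q where "q X Y = A * X^2 + 2 * C * (X * Y) + D * Y^2" for X Y
  have qd: "q X1 Y1 + q X2 Y2 - 2 * q ((X1 + X2)/2) ((Y1 + Y2)/2) = (1/2) * q (X1 - X2) (Y1 - Y2)"
    unfolding q_def power2_eq_square by (simp add: field_simps)
  have qn: "q (X1 - X2) (Y1 - Y2) \<ge> 0" unfolding q_def by (rule qpsd)
  have key: "2 * f sm tm - f s1 t1 - f s2 t2 =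
      (1/2) * ((a*g1+Q1) * d 2 0 + 2 * (a*g12) * d 1 1 + (a*g2+Q2) * d 0 2)
    + (b/4) * (g1^2 * d 4 0 + 4*g1*g12 * d 3 1 + (4*g12^2 + 2*g1*g2) * d 2 2
              + 4*g2*g12 * d 1 3 + g2^2 * d 0 4)
    + (1/(2*p)) * (q X1 Y1 + q X2 Y2 - 2 * q ((X1 + X2)/2) ((Y1 + Y2)/2))"
    unfolding f_expand d_def q_def smX X1_def X2_def Y1_def Y2_def
    by (simp add: algebra_simps)
  have "a*g1 \<ge> 0" "a*g2 \<ge> 0" "a * g12 \<ge> 0" using a g1 g2 g12 by auto
  then have c1: "a*g1+Q1 > 0" "a*g2+Q2 > 0" "a * g12 \<ge> 0" using Q1 Q2 by auto
  have c2: "g1^2 \<ge> 0" "4*g1*g12 \<ge> 0" "4*g12^2 + 2*g1*g2 \<ge> 0" "4*g2*g12 \<ge> 0" "g2^2 \<ge> 0"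
    using g1 g2 g12 by auto
  have nn: "(a*g1+Q1) * d 2 0 \<ge> 0" "2 * (a*g12) * d 1 1 \<ge> 0" "(a*g2+Q2) * d 0 2 \<ge> 0"
    "g1^2 * d 4 0 \<ge> 0" "4*g1*g12 * d 3 1 \<ge> 0" "(4*g12^2 + 2*g1*g2) * d 2 2 \<ge> 0"
    "4*g2*g12 * d 1 3 \<ge> 0" "g2^2 * d 0 4 \<ge> 0"
    using c1 c2 dn[of 2 0] dn[of 1 1] dn[of 0 2] dn[of 4 0] dn[of 3 1] dn[of 2 2] dn[of 1 3] dn[of 0 4]
    by auto
  have strict: "(a*g1+Q1) * d 2 0 + (a*g2+Q2) * d 0 2 > 0"
  proof (cases "s1 = s2")
    case True
    then have "t1 \<noteq> t2" using ne by simp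
    then show ?thesis using dt c1 nn by (simp add: add_nonneg_pos)
  next
    case False
    then show ?thesis using ds c1 nn by (simp add: add_pos_nonneg)
  qed
  have "(1/(2*p)) * (q X1 Y1 + q X2 Y2 - 2 * q ((X1 + X2)/2) ((Y1 + Y2)/2)) \<ge> 0"
    using qd qn p by simp
  moreover have "(b/4) * (g1^2 * d 4 0 + 4*g1*g12 * d 3 1 + (4*g12^2 + 2*g1*g2) * d 2 2
              + 4*g2*g12 * d 1 3 + g2^2 * d 0 4) \<ge> 0"
    using nn b by simp
  moreover have "(a*g1+Q1) * d 2 0 + 2 * (a*g12) * d 1 1 + (a*g2+Q2) * d 0 2 > 0"
    using nn strict by linarith
  then have "(1/2) * ((a*g1+Q1) * d 2 0 + 2 * (a*g12) * d 1 1 + (a*g2+Q2) * d 0 2) > 0" by simp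
  ultimately have "2 * f sm tm - f s1 t1 - f s2 t2 > 0"
    unfolding key by linarith
  moreover have "f sm tm \<le> f s1 t1" "f sm tm \<le> f s2 t2" using m1 m2 smp by auto
  ultimately show False by linarith
qed

theorem main2D:
  "\<exists>!(s, t). s > 0 \<and> t > 0 \<and> E s t = 0 \<and> EE a b p g2 g12 g1 Q2 Q1 D C A t s = 0
     \<and> (\<forall>s' t'. 0 \<le> s' \<longrightarrow> 0 \<le> t' \<longrightarrow> f s' t' \<le> f s t)"
proof -
  interpret sw: twoD a b p g2 g12 g1 Q2 Q1 D C A by (rule swapped)
  obtain s0 t0 where st0: "0 \<le> s0" "0 \<le> t0" and mx: "\<forall>s t. 0 \<le> s \<longrightarrow> 0 \<le> t \<longrightarrow> f s t \<le> f s0 t0"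
    using exists_max by blast
  have mx': "\<forall>s t. 0 \<le> s \<longrightarrow> 0 \<le> t \<longrightarrow> sw.f s t \<le> sw.f t0 s0"
    using mx by (simp add: ff_swap[of a b p g1 g12 g2 Q1 Q2 A C D])
  have t0: "t0 > 0"
  proof (rule ccontr)
    assume "\<not> t0 > 0" then have "t0 = 0" using st0 by simp
    then obtain \<tau> where "\<tau> > 0" "f s0 t0 < f s0 \<tau>" using bump[OF st0(1)] by blast
    then show False using mx by (meson less_eq_real_def not_le st0(1))
  qed
  have s0: "s0 > 0"
  proof (rule ccontr)
    assume "\<not> s0 > 0" then have "s0 = 0" using st0 by simp
    then obtain \<tau> where "\<tau> > 0" "sw.f t0 s0 < sw.f t0 \<tau>" using sw.bump[OF st0(2)] by blast
    then show False using mx' by (meson less_eq_real_def not_le st0(2))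
  qed
  have e1: "E s0 t0 = 0" using nehari_s[OF s0 st0(2) mx] .
  have e2: "EE a b p g2 g12 g1 Q2 Q1 D C A t0 s0 = 0" using sw.nehari_s[OF t0 st0(1) mx'] .
  show ?thesis
  proof (rule ex_ex1I)
    show "\<exists>z. case z of (s, t) \<Rightarrow> s > 0 \<and> t > 0 \<and> E s t = 0 \<and> EE a b p g2 g12 g1 Q2 Q1 D C A t s = 0
     \<and> (\<forall>s' t'. 0 \<le> s' \<longrightarrow> 0 \<le> t' \<longrightarrow> f s' t' \<le> f s t)"
      using s0 t0 e1 e2 mx by (intro exI[of _ "(s0, t0)"]) simp
  next
    fix z1 z2 :: "real \<times> real"
    assume "case z1 of (s, t) \<Rightarrow> s > 0 \<and> t > 0 \<and> E s t = 0 \<and> EE a b p g2 g12 g1 Q2 Q1 D C A t s = 0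
     \<and> (\<forall>s' t'. 0 \<le> s' \<longrightarrow> 0 \<le> t' \<longrightarrow> f s' t' \<le> f s t)"
      and "case z2 of (s, t) \<Rightarrow> s > 0 \<and> t > 0 \<and> E s t = 0 \<and> EE a b p g2 g12 g1 Q2 Q1 D C A t s = 0
     \<and> (\<forall>s' t'. 0 \<le> s' \<longrightarrow> 0 \<le> t' \<longrightarrow> f s' t' \<le> f s t)"
    then show "z1 = z2" using unique_max by (cases z1, cases z2) auto
  qed
qed

end


lemma cs_integrable:
  fixes f :: "'a \<Rightarrow> real"
  assumes "f summable_on UNIV" shows "integrable (count_space UNIV) f"
proof -
  have "Infinite_Sum.abs_summable_on f UNIV" using assms summable_on_iff_abs_summable_on_real by blast
  then have "Infinite_Set_Sum.abs_summable_on f UNIV" using abs_summable_equivalent by blast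
  then show ?thesis by (simp add: abs_summable_on_def)
qed

lemma cs_integral:
  fixes f :: "'a \<Rightarrow> real"
  assumes "f summable_on UNIV" shows "integral\<^sup>L (count_space UNIV) f = (\<Sum>\<^sub>\<infinity>x. f x)"
proof -
  have "Infinite_Sum.abs_summable_on f UNIV" using assms summable_on_iff_abs_summable_on_real by blast
  then have "Infinite_Set_Sum.abs_summable_on f UNIV" using abs_summable_equivalent by blast
  then show ?thesis using infsetsum_infsum by (metis infsetsum_def)
qed

lemma summable_bound:
  fixes f g :: "'a \<Rightarrow> real"
  assumes "g summable_on UNIV" "\<And>x. \<bar>f x\<bar> \<le> g x" shows "f summable_on UNIV"
proof -
  have "(\<lambda>x. \<bar>f x\<bar>) summable_on UNIV"
    using assms by (intro summable_on_comparison_test[OF assms(1)]) auto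
  then show ?thesis using summable_on_iff_abs_summable_on_real by fastforce
qed

lemma summable_abs:
  fixes f :: "'a \<Rightarrow> real"
  assumes "f summable_on UNIV" shows "(\<lambda>x. \<bar>f x\<bar>) summable_on UNIV"
  using assms summable_on_iff_abs_summable_on_real by fastforce

lemma exchange:
  fixes \<phi> :: "'a::countable \<Rightarrow> real" and e :: "'a \<Rightarrow> 'b \<Rightarrow> real" and g :: "'b \<Rightarrow> real"
  assumes sf: "sigma_finite_measure M" and phi: "\<phi> summable_on UNIV" and g: "integrable M g"
    and em: "\<And>x. e x \<in> borel_measurable M" and eb: "\<And>x k. \<bar>e x k\<bar> \<le> 1"
  shows "(\<lambda>x. \<phi> x * (\<integral>k. e x k * g k \<partial>M)) summable_on UNIV"
    and "integrable M (\<lambda>k. (\<Sum>\<^sub>\<infinity>x. \<phi> x * e x k) * g k)"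
    and "(\<Sum>\<^sub>\<infinity>x. \<phi> x * (\<integral>k. e x k * g k \<partial>M)) = (\<integral>k. (\<Sum>\<^sub>\<infinity>x. \<phi> x * e x k) * g k \<partial>M)"
proof -
  interpret M: sigma_finite_measure M by (rule sf)
  interpret C: sigma_finite_measure "count_space (UNIV::'a set)"
    by (rule sigma_finite_measure_count_space_countable) simp
  interpret P: pair_sigma_finite "count_space (UNIV::'a set)" M ..
  define F where "F x k = \<phi> x * e x k * g k" for x k
  have gm: "g \<in> borel_measurable M" using g by simp
  have Fm: "(\<lambda>z. F (fst z) (snd z)) \<in> borel_measurable (count_space UNIV \<Otimes>\<^sub>M M)"
    unfolding F_def
    by (rule measurable_pair_measure_countable1) (use em gm in auto)
  define ng where "ng = (\<integral>k. \<bar>g k\<bar> \<partial>M)"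
  have ng: "ng \<ge> 0" unfolding ng_def by simp
  have absphi: "(\<lambda>x. \<bar>\<phi> x\<bar>) summable_on UNIV" using summable_abs[OF phi] .
  have intx: "integrable M (\<lambda>k. F x k)" for x
  proof (rule Bochner_Integration.integrable_bound[of _ "\<lambda>k. \<bar>\<phi> x\<bar> * \<bar>g k\<bar>"])
    show "integrable M (\<lambda>k. \<bar>\<phi> x\<bar> * \<bar>g k\<bar>)" using g by simp
    show "(\<lambda>k. F x k) \<in> borel_measurable M" unfolding F_def using em gm by simp
    show "AE k in M. norm (F x k) \<le> norm (\<bar>\<phi> x\<bar> * \<bar>g k\<bar>)"
    proof (rule AE_I2)
      fix k
      have "\<bar>e x k * g k\<bar> \<le> \<bar>g k\<bar>" using eb[of x k] by (simp add: abs_mult mult_left_le_one_le)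
      then show "norm (F x k) \<le> norm (\<bar>\<phi> x\<bar> * \<bar>g k\<bar>)"
        unfolding F_def by (simp add: abs_mult mult.assoc mult_left_mono)
    qed
  qed
  have intabs: "(\<integral>k. norm (F x k) \<partial>M) \<le> \<bar>\<phi> x\<bar> * ng" for x
  proof -
    have "(\<integral>k. norm (F x k) \<partial>M) \<le> (\<integral>k. \<bar>\<phi> x\<bar> * \<bar>g k\<bar> \<partial>M)"
    proof (rule integral_mono)
      show "integrable M (\<lambda>k. norm (F x k))" using intx by simp
      show "integrable M (\<lambda>k. \<bar>\<phi> x\<bar> * \<bar>g k\<bar>)" using g by simp
      fix k
      have "\<bar>e x k * g k\<bar> \<le> \<bar>g k\<bar>" using eb[of x k] by (simp add: abs_mult mult_left_le_one_le)
      then show "norm (F x k) \<le> \<bar>\<phi> x\<bar> * \<bar>g k\<bar>"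
        unfolding F_def by (simp add: abs_mult mult.assoc mult_left_mono)
    qed
    then show ?thesis unfolding ng_def by simp
  qed
  have sum1: "(\<lambda>x. \<integral>k. norm (F x k) \<partial>M) summable_on UNIV"
  proof (rule summable_bound[of "\<lambda>x. \<bar>\<phi> x\<bar> * ng"])
    show "(\<lambda>x. \<bar>\<phi> x\<bar> * ng) summable_on UNIV" using absphi by (intro summable_on_cmult_left)
    show "\<bar>\<integral>k. norm (F x k) \<partial>M\<bar> \<le> \<bar>\<phi> x\<bar> * ng" for x
      using intabs[of x] by simp
  qed
  have Fint: "integrable (count_space UNIV \<Otimes>\<^sub>M M) (\<lambda>z. F (fst z) (snd z))"
  proof (rule P.Fubini_integrable)
    show "(\<lambda>z. F (fst z) (snd z)) \<in> borel_measurable (count_space UNIV \<Otimes>\<^sub>M M)" by (rule Fm)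
    show "integrable (count_space UNIV) (\<lambda>x. \<integral>y. norm (F (fst (x, y)) (snd (x, y))) \<partial>M)"
      using cs_integrable[OF sum1] by simp
    show "AE x in count_space UNIV. integrable M (\<lambda>y. F (fst (x, y)) (snd (x, y)))"
      using intx by simp
  qed
  then have Fint': "integrable (count_space UNIV \<Otimes>\<^sub>M M) (case_prod F)"
    by (simp add: case_prod_beta')
  have inner1: "(\<integral>k. F x k \<partial>M) = \<phi> x * (\<integral>k. e x k * g k \<partial>M)" for x
    unfolding F_def by (simp add: mult.assoc)
  have s_inner: "(\<lambda>x. F x k) summable_on UNIV" for k
  proof (rule summable_bound[of "\<lambda>x. \<bar>\<phi> x\<bar> * \<bar>g k\<bar>"])
    show "(\<lambda>x. \<bar>\<phi> x\<bar> * \<bar>g k\<bar>) summable_on UNIV" using absphi by (intro summable_on_cmult_left)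
    fix x
    have "\<bar>e x k * g k\<bar> \<le> \<bar>g k\<bar>" using eb[of x k] by (simp add: abs_mult mult_left_le_one_le)
    then show "\<bar>F x k\<bar> \<le> \<bar>\<phi> x\<bar> * \<bar>g k\<bar>" unfolding F_def by (simp add: abs_mult mult.assoc mult_left_mono)
  qed
  have inner2: "(\<integral>x. F x k \<partial>count_space UNIV) = (\<Sum>\<^sub>\<infinity>x. \<phi> x * e x k) * g k" for k
  proof -
    have "(\<integral>x. F x k \<partial>count_space UNIV) = (\<Sum>\<^sub>\<infinity>x. F x k)" using cs_integral[OF s_inner] .
    also have "\<dots> = (\<Sum>\<^sub>\<infinity>x. \<phi> x * e x k) * g k" unfolding F_def by (rule infsum_cmult_left')
    finally show ?thesis .
  qed
  show S1: "(\<lambda>x. \<phi> x * (\<integral>k. e x k * g k \<partial>M)) summable_on UNIV"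
  proof (rule summable_bound[of "\<lambda>x. \<bar>\<phi> x\<bar> * ng"])
    show "(\<lambda>x. \<bar>\<phi> x\<bar> * ng) summable_on UNIV" using absphi by (intro summable_on_cmult_left)
    fix x
    have "\<bar>\<integral>k. F x k \<partial>M\<bar> \<le> (\<integral>k. norm (F x k) \<partial>M)" using integral_norm_bound[of M "F x"] by simp
    then show "\<bar>\<phi> x * (\<integral>k. e x k * g k \<partial>M)\<bar> \<le> \<bar>\<phi> x\<bar> * ng"
      using intabs[of x] inner1[of x] by simp
  qed
  show "integrable M (\<lambda>k. (\<Sum>\<^sub>\<infinity>x. \<phi> x * e x k) * g k)"
    using P.integrable_snd[OF Fint'] inner2 by simp
  have "(\<integral>k. (\<integral>x. F x k \<partial>count_space UNIV) \<partial>M) = (\<integral>x. (\<integral>k. F x k \<partial>M) \<partial>count_space UNIV)"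
    by (rule P.Fubini_integral[OF Fint'])
  then have "(\<integral>k. (\<Sum>\<^sub>\<infinity>x. \<phi> x * e x k) * g k \<partial>M) = (\<integral>x. \<phi> x * (\<integral>k. e x k * g k \<partial>M) \<partial>count_space UNIV)"
    using inner1 inner2 by simp
  also have "\<dots> = (\<Sum>\<^sub>\<infinity>x. \<phi> x * (\<integral>k. e x k * g k \<partial>M))" by (rule cs_integral[OF S1])
  finally show "(\<Sum>\<^sub>\<infinity>x. \<phi> x * (\<integral>k. e x k * g k \<partial>M)) = (\<integral>k. (\<Sum>\<^sub>\<infinity>x. \<phi> x * e x k) * g k \<partial>M)" by simp
qed


lemma sin_concave: "concave_on {0..pi/2} sin"
proof (rule f''_le0_imp_concave[where f' = cos and f'' = "\<lambda>x. - sin x"])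
  show "convex {0..pi/2::real}" by simp
  show "(sin has_real_derivative cos x) (at x)" for x by (rule DERIV_sin)
  show "(cos has_real_derivative - sin x) (at x)" for x by (rule DERIV_cos)
  show "- sin x \<le> 0" if "x \<in> {0..pi/2}" for x using that by (simp add: sin_ge_zero)
qed

lemma sin_lower: assumes "0 \<le> y" "y \<le> pi/2" shows "sin y \<ge> 2 * y / pi"
proof -
  define t where "t = 2 * y / pi"
  have t: "0 \<le> t" "t \<le> 1" using assms pi_gt_zero by (auto simp: t_def field_simps)
  have "sin ((1 - t) *\<^sub>R 0 + t *\<^sub>R (pi/2)) \<ge> (1 - t) * sin 0 + t * sin (pi/2)"
    using concave_onD[OF sin_concave, of t 0 "pi/2"] t by simp
  moreover have "(1 - t) *\<^sub>R 0 + t *\<^sub>R (pi/2) = y" unfolding t_def by simp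
  ultimately show ?thesis by (simp add: t_def)
qed

lemma cos_upper: fixes x :: real assumes "\<bar>x\<bar> \<le> pi" shows "1 - cos x \<ge> 2 * x^2 / pi^2"
proof -
  have "cos x = cos (2 * (\<bar>x\<bar>/2))" by (cases "x \<ge> 0") auto
  also have "\<dots> = 1 - 2 * sin (\<bar>x\<bar>/2) ^ 2" by (rule cos_double_sin)
  finally have c: "1 - cos x = 2 * sin (\<bar>x\<bar>/2) ^ 2" by simp
  have s: "sin (\<bar>x\<bar>/2) \<ge> \<bar>x\<bar> / pi" using sin_lower[of "\<bar>x\<bar>/2"] assms by simp
  have "(\<bar>x\<bar> / pi)^2 \<le> sin (\<bar>x\<bar>/2) ^ 2" using s by (intro power_mono) auto
  then have "x^2 / pi^2 \<le> sin (\<bar>x\<bar>/2) ^ 2" by (simp add: power_divide)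
  then show ?thesis using c by simp
qed

lemma torus_mem: "k \<in> torus \<longleftrightarrow> \<bar>fst k\<bar> \<le> pi \<and> \<bar>fst (snd k)\<bar> \<le> pi \<and> \<bar>snd (snd k)\<bar> \<le> pi"
  by (cases k) (auto simp: torus_def cbox_Pair_iff abs_le_iff)

lemma symb_lower:
  assumes "k \<in> torus"
  shows "symb k \<ge> (4 / pi^2) * ((fst k)^2 + (fst (snd k))^2 + (snd (snd k))^2)"
proof -
  have "1 - cos (fst k) \<ge> 2 * (fst k)^2 / pi^2" "1 - cos (fst (snd k)) \<ge> 2 * (fst (snd k))^2 / pi^2"
    "1 - cos (snd (snd k)) \<ge> 2 * (snd (snd k))^2 / pi^2"
    using assms by (auto simp: torus_mem intro!: cos_upper)
  then show ?thesis unfolding symb_def by (simp add: field_simps)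
qed

lemma symb_nonneg: "symb k \<ge> 0"
proof -
  have "cos (fst k) \<le> 1" "cos (fst (snd k)) \<le> 1" "cos (snd (snd k)) \<le> 1" by auto
  then show ?thesis unfolding symb_def by (smt (verit))
qed

lemma symb_pos: "k \<in> torus \<Longrightarrow> k \<noteq> 0 \<Longrightarrow> symb k > 0"
proof -
  assume k: "k \<in> torus" "k \<noteq> 0"
  then have "(fst k)^2 + (fst (snd k))^2 + (snd (snd k))^2 > 0"
    by (cases k) (auto simp: zero_prod_def add_pos_nonneg add_nonneg_pos)
  then show ?thesis using symb_lower[OF k(1)] by (smt (verit) divide_pos_pos mult_pos_pos pi_gt_zero zero_less_power)
qed

lemma w_bound:
  fixes \<alpha> :: real
  assumes a: "0 < \<alpha>" and k: "k \<in> torus" and nz: "fst k \<noteq> 0" "fst (snd k) \<noteq> 0" "snd (snd k) \<noteq> 0"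
  shows "symb k powr (-\<alpha>/2) \<le> (4 / pi^2) powr (-\<alpha>/2) *
     (\<bar>fst k\<bar> powr (-\<alpha>/3) * \<bar>fst (snd k)\<bar> powr (-\<alpha>/3) * \<bar>snd (snd k)\<bar> powr (-\<alpha>/3))"
proof -
  define x1 where "x1 = fst k"
  define x2 where "x2 = fst (snd k)"
  define x3 where "x3 = snd (snd k)"
  define S where "S = x1^2 + x2^2 + x3^2"
  have xs: "x1 \<noteq> 0" "x2 \<noteq> 0" "x3 \<noteq> 0" using nz by (auto simp: x1_def x2_def x3_def)
  have S: "S > 0" using xs by (simp add: S_def add_pos_nonneg)
  have sl: "symb k \<ge> (4 / pi^2) * S" using symb_lower[OF k] by (simp add: S_def x1_def x2_def x3_def)
  have sp: "(4 / pi^2) * S > 0" using S by simp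
  have "symb k powr (-\<alpha>/2) \<le> ((4 / pi^2) * S) powr (-\<alpha>/2)"
    using a sp sl by (intro powr_mono2') auto
  also have "\<dots> = (4 / pi^2) powr (-\<alpha>/2) * S powr (-\<alpha>/2)" using powr_mult[of "4/pi^2" S "-\<alpha>/2"] S by simp
  also have "S powr (-\<alpha>/2) \<le> \<bar>x1\<bar> powr (-\<alpha>/3) * \<bar>x2\<bar> powr (-\<alpha>/3) * \<bar>x3\<bar> powr (-\<alpha>/3)"
  proof -
    have e: "S powr (-\<alpha>/2) = S powr (-\<alpha>/6) * S powr (-\<alpha>/6) * S powr (-\<alpha>/6)"
      by (simp add: powr_add[symmetric])
    have b: "S powr (-\<alpha>/6) \<le> \<bar>x\<bar> powr (-\<alpha>/3)" if "x \<noteq> 0" "x^2 \<le> S" for x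
    proof -
      have "S powr (-\<alpha>/6) \<le> (x^2) powr (-\<alpha>/6)" using that a by (intro powr_mono2') auto
      also have "(x^2) powr (-\<alpha>/6) = \<bar>x\<bar> powr (-\<alpha>/3)"
      proof -
        have "(x^2) = \<bar>x\<bar> powr 2" using that by (simp add: powr_numeral)
        then have "(x^2) powr (-\<alpha>/6) = (\<bar>x\<bar> powr 2) powr (-\<alpha>/6)"
          by (rule arg_cong[where f="\<lambda>z. z powr (-\<alpha>/6)"])
        also have "\<dots> = \<bar>x\<bar> powr (-\<alpha>/3)" unfolding powr_powr by (simp add: field_simps)
        finally show ?thesis .
      qed
      finally show ?thesis .
    qed
    have "x1^2 \<le> S" "x2^2 \<le> S" "x3^2 \<le> S" unfolding S_def by auto
    then have b1: "S powr (-\<alpha>/6) \<le> \<bar>x1\<bar> powr (-\<alpha>/3)" "S powr (-\<alpha>/6) \<le> \<bar>x2\<bar> powr (-\<alpha>/3)"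
      "S powr (-\<alpha>/6) \<le> \<bar>x3\<bar> powr (-\<alpha>/3)" using b xs by auto
    show ?thesis unfolding e by (intro mult_mono b1) auto
  qed
  finally show ?thesis using a by (simp add: x1_def x2_def x3_def mult_left_mono)
qed

lemma prod_basis3:
  fixes f :: "real \<Rightarrow> 'a::comm_monoid_mult"
  shows "(\<Prod>b\<in>(Basis::(real\<times>real\<times>real) set). f (k \<bullet> b)) = f (fst k) * f (fst (snd k)) * f (snd (snd k))"
  by (cases k) (simp add: Basis_prod_def prod.union_disjoint prod.reindex inj_on_def image_Int image_iff mult_ac)

lemma psi_has_integral:
  fixes \<beta> :: real
  assumes "0 \<le> \<beta>" "\<beta> < 1"
  shows "((\<lambda>x. \<bar>x\<bar> powr (-\<beta>)) has_integral (2 * (pi powr (1 - \<beta>) / (1 - \<beta>)))) {-pi..pi}"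
proof -
  have h0: "((\<lambda>x. x powr (-\<beta>)) has_integral (pi powr (-\<beta> + 1) / (-\<beta> + 1))) {0..pi}"
    using assms by (intro has_integral_powr_from_0) auto
  have h1: "((\<lambda>x. \<bar>x\<bar> powr (-\<beta>)) has_integral (pi powr (1 - \<beta>) / (1 - \<beta>))) {0..pi}"
  proof -
    have h0': "((\<lambda>x. x powr (-\<beta>)) has_integral (pi powr (1 - \<beta>) / (1 - \<beta>))) {0..pi}"
      using h0 by (simp add: add.commute)
    show ?thesis by (rule has_integral_eq[OF _ h0']) auto
  qed
  have h2: "((\<lambda>x. \<bar>x\<bar> powr (-\<beta>)) has_integral (pi powr (1 - \<beta>) / (1 - \<beta>))) {-pi..0}"
    using has_integral_reflect_real[where f="\<lambda>x. \<bar>x\<bar> powr (-\<beta>)" and a=0 and b=pi] h1 by simp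
  have "((\<lambda>x. \<bar>x\<bar> powr (-\<beta>)) has_integral (pi powr (1 - \<beta>) / (1 - \<beta>) + pi powr (1 - \<beta>) / (1 - \<beta>))) {-pi..pi}"
    by (rule has_integral_combine[OF _ _ h2 h1]) auto
  then show ?thesis by simp
qed

lemma psi_nn:
  fixes \<beta> :: real
  assumes "0 \<le> \<beta>" "\<beta> < 1"
  shows "(\<integral>\<^sup>+ x. ennreal (indicator {-pi..pi} x * \<bar>x\<bar> powr (-\<beta>)) \<partial>lborel)
        = ennreal (2 * (pi powr (1 - \<beta>) / (1 - \<beta>)))"
  by (rule nn_integral_has_integral_lebesgue[OF _ psi_has_integral[OF assms]]) simp

definition psi3 :: "real \<Rightarrow> real \<times> real \<times> real \<Rightarrow> real" where
  "psi3 \<beta> k = (\<Prod>b\<in>(Basis::(real\<times>real\<times>real) set). indicator {-pi..pi} (k \<bullet> b) * \<bar>k \<bullet> b\<bar> powr (-\<beta>))"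

lemma psi3_integrable:
  fixes \<beta> :: real
  assumes "0 \<le> \<beta>" "\<beta> < 1"
  shows "integrable lborel (psi3 \<beta>)"
proof (rule integrableI_nn_integral_finite)
  show "psi3 \<beta> \<in> borel_measurable lborel" unfolding psi3_def by measurable
  show "AE x in lborel. 0 \<le> psi3 \<beta> x" unfolding psi3_def by (auto intro!: prod_nonneg)
  have "(\<integral>\<^sup>+ k. ennreal (psi3 \<beta> k) \<partial>lborel)
     = (\<integral>\<^sup>+ k. (\<Prod>b\<in>(Basis::(real\<times>real\<times>real) set). ennreal (indicator {-pi..pi} (k \<bullet> b) * \<bar>k \<bullet> b\<bar> powr (-\<beta>))) \<partial>lborel)"
    unfolding psi3_def by (subst prod_ennreal) auto
  also have "\<dots> = (\<Prod>b\<in>(Basis::(real\<times>real\<times>real) set). (\<integral>\<^sup>+ x. ennreal (indicator {-pi..pi} x * \<bar>x\<bar> powr (-\<beta>)) \<partial>lborel))"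
    by (rule nn_integral_lborel_prod[where f = "\<lambda>b x. ennreal (indicator {-pi..pi} x * \<bar>x\<bar> powr (-\<beta>))"]) auto
  also have "\<dots> = (\<Prod>b\<in>(Basis::(real\<times>real\<times>real) set). ennreal (2 * (pi powr (1 - \<beta>) / (1 - \<beta>))))"
    using psi_nn[OF assms] by simp
  also have "\<dots> = ennreal ((2 * (pi powr (1 - \<beta>) / (1 - \<beta>))) ^ 3)"
  proof -
    have "0 \<le> 2 * (pi powr (1 - \<beta>) / (1 - \<beta>))" using assms by simp
    then show ?thesis by (subst ennreal_power[symmetric]) (auto simp: power3_eq_cube mult.assoc)
  qed
  finally show "(\<integral>\<^sup>+ k. ennreal (psi3 \<beta> k) \<partial>lborel) = ennreal ((2 * (pi powr (1 - \<beta>) / (1 - \<beta>))) ^ 3)" .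
qed

lemma psi3_eq: "k \<in> torus \<Longrightarrow> psi3 \<beta> k = \<bar>fst k\<bar> powr (-\<beta>) * \<bar>fst (snd k)\<bar> powr (-\<beta>) * \<bar>snd (snd k)\<bar> powr (-\<beta>)"
  unfolding psi3_def prod_basis3[where f = "\<lambda>x. indicator {-pi..pi} x * \<bar>x\<bar> powr (-\<beta>)"]
  by (auto simp: torus_mem abs_le_iff)

lemma null_pt: "{0::real} \<in> null_sets lborel" by (rule countable_imp_null_set_lborel) simp

lemma AE_coords_nz: "AE k in (lborel :: (real\<times>real\<times>real) measure). fst k \<noteq> 0 \<and> fst (snd k) \<noteq> 0 \<and> snd (snd k) \<noteq> 0"
proof -
  have n1: "{0::real} \<times> (UNIV::(real\<times>real) set) \<in> null_sets (lborel \<Otimes>\<^sub>M lborel)"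
    by (rule lborel.times_in_null_sets1) auto
  have n2a: "{0::real} \<times> (UNIV::real set) \<in> null_sets (lborel \<Otimes>\<^sub>M lborel)"
    by (rule lborel.times_in_null_sets1) auto
  have n3a: "(UNIV::real set) \<times> {0::real} \<in> null_sets (lborel \<Otimes>\<^sub>M lborel)"
    by (rule lborel.times_in_null_sets2) auto
  have n2b: "{0::real} \<times> (UNIV::real set) \<in> null_sets (lborel :: (real\<times>real) measure)"
    using n2a by (simp only: lborel_prod)
  have n3b: "(UNIV::real set) \<times> {0::real} \<in> null_sets (lborel :: (real\<times>real) measure)"
    using n3a by (simp only: lborel_prod)
  have n2: "(UNIV::real set) \<times> ({0::real} \<times> (UNIV::real set)) \<in> null_sets (lborel \<Otimes>\<^sub>M lborel)"
    by (rule lborel.times_in_null_sets2) (use n2b in auto)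
  have n3: "(UNIV::real set) \<times> ((UNIV::real set) \<times> {0::real}) \<in> null_sets (lborel \<Otimes>\<^sub>M lborel)"
    by (rule lborel.times_in_null_sets2) (use n3b in auto)
  let ?N = "{0::real} \<times> (UNIV::(real\<times>real) set) \<union> (UNIV::real set) \<times> ({0::real} \<times> (UNIV::real set))
     \<union> (UNIV::real set) \<times> ((UNIV::real set) \<times> {0::real})"
  have "?N \<in> null_sets (lborel \<Otimes>\<^sub>M lborel)" using n1 n2 n3 by auto
  then have N: "?N \<in> null_sets (lborel :: (real\<times>real\<times>real) measure)" by (simp only: lborel_prod)
  show ?thesis by (rule AE_I'[OF N]) auto
qed

definition wt :: "real \<Rightarrow> real \<times> real \<times> real \<Rightarrow> real" where
  "wt \<alpha> k = symb k powr (-\<alpha>/2)"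

lemma wt_nonneg: "wt \<alpha> k \<ge> 0" unfolding wt_def by simp

lemma torus_sets[measurable]: "torus \<in> sets lborel"
  unfolding torus_def by simp

lemma symb_cont: "continuous_on UNIV symb"
  unfolding symb_def by (intro continuous_intros)

lemma symb_measurable[measurable]: "symb \<in> borel_measurable lborel"
  using borel_measurable_continuous_onI[OF symb_cont] by simp

lemma wt_measurable[measurable]: "wt \<alpha> \<in> borel_measurable lborel"
  unfolding wt_def by measurable

lemma wt_integrable:
  assumes a: "0 < \<alpha>" "\<alpha> < 3"
  shows "integrable lborel (\<lambda>k. indicator torus k * wt \<alpha> k)"
proof (rule Bochner_Integration.integrable_bound[of _ "\<lambda>k. (4 / pi^2) powr (-\<alpha>/2) * psi3 (\<alpha>/3) k"])
  show "integrable lborel (\<lambda>k. (4 / pi^2) powr (-\<alpha>/2) * psi3 (\<alpha>/3) k)"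
    using psi3_integrable[of "\<alpha>/3"] a by simp
  show "(\<lambda>k. indicator torus k * wt \<alpha> k) \<in> borel_measurable lborel"
    using wt_measurable by (intro borel_measurable_times borel_measurable_indicator torus_sets)
  show "AE k in lborel. norm (indicator torus k * wt \<alpha> k) \<le> norm ((4 / pi^2) powr (-\<alpha>/2) * psi3 (\<alpha>/3) k)"
    using AE_coords_nz
  proof (rule AE_mp, intro AE_I2 impI)
    fix k :: "real \<times> real \<times> real"
    assume nz: "fst k \<noteq> 0 \<and> fst (snd k) \<noteq> 0 \<and> snd (snd k) \<noteq> 0"
    have p3: "psi3 (\<alpha>/3) k \<ge> 0" unfolding psi3_def by (auto intro!: prod_nonneg)
    show "norm (indicator torus k * wt \<alpha> k) \<le> norm ((4 / pi^2) powr (-\<alpha>/2) * psi3 (\<alpha>/3) k)"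
    proof (cases "k \<in> torus")
      case True
      have "wt \<alpha> k \<le> (4 / pi^2) powr (-\<alpha>/2) * psi3 (\<alpha>/3) k"
      proof -
        have "symb k powr (-\<alpha>/2) \<le> (4 / pi^2) powr (-\<alpha>/2) *
           (\<bar>fst k\<bar> powr (-\<alpha>/3) * \<bar>fst (snd k)\<bar> powr (-\<alpha>/3) * \<bar>snd (snd k)\<bar> powr (-\<alpha>/3))"
          by (rule w_bound[OF a(1) True]) (use nz in auto)
        then show ?thesis by (simp only: wt_def psi3_eq[OF True] minus_divide_left)
      qed
      then show ?thesis using True wt_nonneg[of \<alpha> k] p3 by simp
    next
      case False
      then show ?thesis by simp
    qed
  qed
qed


lemma cos_le0: assumes "pi/2 \<le> x" "x \<le> pi" shows "cos x \<le> 0"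
proof -
  have "0 \<le> cos (pi - x)" by (rule cos_ge_zero) (use assms in auto)
  then show ?thesis by simp
qed

lemma K_const_pos: assumes "0 < \<alpha>" shows "K_const \<alpha> > 0"
proof -
  define f where "f k = symb k powr (\<alpha>/2)" for k
  have fc: "continuous_on UNIV f" unfolding f_def
    using assms by (intro continuous_on_powr' symb_cont continuous_on_const) (auto simp: symb_nonneg)
  let ?B = "cbox (pi/2, pi/2, pi/2) (pi, pi, pi)"
  have fi: "f integrable_on torus" unfolding torus_def
    by (rule integrable_continuous) (rule continuous_on_subset[OF fc], simp)
  have fiB: "f integrable_on ?B"
    by (rule integrable_continuous) (rule continuous_on_subset[OF fc], simp)
  have Bsub: "?B \<subseteq> torus" unfolding torus_def
    by (auto simp: cbox_Pair_iff)
  have f1: "f k \<ge> 1" if "k \<in> ?B" for k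
  proof -
    obtain k1 k2 k3 where k: "k = (k1, k2, k3)" by (cases k) auto
    have r: "pi/2 \<le> k1" "k1 \<le> pi" "pi/2 \<le> k2" "k2 \<le> pi" "pi/2 \<le> k3" "k3 \<le> pi"
      using that by (auto simp: k cbox_Pair_iff)
    have "cos k1 \<le> 0" "cos k2 \<le> 0" "cos k3 \<le> 0" using r by (auto intro!: cos_le0)
    then have "symb k \<ge> 1" unfolding symb_def k by simp
    then show ?thesis unfolding f_def using assms by (simp add: ge_one_powr_ge_zero)
  qed
  have "measure lborel ?B > 0" by (rule content_pos_lt) (auto simp: Basis_prod_def)
  also have "measure lborel ?B = integral ?B (\<lambda>k. 1::real)" by simp
  also have "\<dots> \<le> integral ?B f" by (rule integral_le) (use fiB f1 in auto)
  also have "\<dots> \<le> integral torus f" by (rule integral_subset_le[OF Bsub fiB fi]) (simp add: f_def)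
  finally show ?thesis unfolding K_const_def f_def by simp
qed

definition Wt :: "real \<Rightarrow> real \<times> real \<times> real \<Rightarrow> real" where
  "Wt \<alpha> k = indicator torus k * wt \<alpha> k"

definition kap :: "real \<Rightarrow> real" where
  "kap \<alpha> = K_const \<alpha> / (2*pi)^3"

lemma kap_pos: "0 < \<alpha> \<Longrightarrow> kap \<alpha> > 0"
  unfolding kap_def using K_const_pos by simp

lemma Wt_nonneg: "Wt \<alpha> k \<ge> 0" unfolding Wt_def by (simp add: wt_nonneg)

lemma Wt_integrable: "0 < \<alpha> \<Longrightarrow> \<alpha> < 3 \<Longrightarrow> integrable lborel (Wt \<alpha>)"
  unfolding Wt_def using wt_integrable by simp

lemma Wt_measurable[measurable]: "Wt \<alpha> \<in> borel_measurable lborel"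
  unfolding Wt_def using wt_measurable by (intro borel_measurable_times borel_measurable_indicator torus_sets)

lemma dotk_cont: "continuous_on UNIV (dotk z)"
  unfolding dotk_def by (intro continuous_intros)

lemma dotk_measurable[measurable]: "dotk z \<in> borel_measurable lborel"
  using borel_measurable_continuous_onI[OF dotk_cont] by simp

lemma dotk_diff: "dotk (x - y) k = dotk x k - dotk y k"
  unfolding dotk_def by (simp add: algebra_simps)

lemma R_repr:
  assumes a: "0 < \<alpha>" "\<alpha> < 3"
  shows "R_kernel \<alpha> x y = kap \<alpha> * (\<integral>k. cos (dotk (x - y) k) * Wt \<alpha> k \<partial>lborel)"
proof -
  define F where "F k = exp (\<i> * complex_of_real (dotk (x - y) k)) * complex_of_real (symb k powr (-\<alpha>/2))" for k
  have Fm: "F \<in> borel_measurable lborel"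
  proof -
    have "(\<lambda>k. dotk (x - y) k) \<in> borel_measurable lborel" by simp
    moreover have "(\<lambda>k. symb k powr (-\<alpha>/2)) \<in> borel_measurable lborel" using wt_measurable[of \<alpha>] by (simp add: wt_def)
    ultimately show ?thesis unfolding F_def by measurable
  qed
  have Fi: "set_integrable lborel torus F"
    unfolding set_integrable_def
  proof (rule Bochner_Integration.integrable_bound[OF Wt_integrable[OF a]])
    show "(\<lambda>k. indicator torus k *\<^sub>R F k) \<in> borel_measurable lborel" using Fm by measurable
    show "AE k in lborel. norm (indicator torus k *\<^sub>R F k) \<le> norm (Wt \<alpha> k)"
      by (intro AE_I2) (simp add: F_def Wt_def wt_def norm_mult indicator_def)
  qed
  have "integral torus F = set_lebesgue_integral lborel torus F"
    by (rule set_borel_integral_eq_integral(2)[OF Fi, symmetric])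
  also have "Re \<dots> = (\<integral>k. Re (indicator torus k *\<^sub>R F k) \<partial>lborel)"
    unfolding set_lebesgue_integral_def using Fi unfolding set_integrable_def by (rule integral_Re[symmetric])
  also have "\<dots> = (\<integral>k. cos (dotk (x - y) k) * Wt \<alpha> k \<partial>lborel)"
    by (rule Bochner_Integration.integral_cong) (auto simp: F_def Wt_def wt_def indicator_def Re_exp)
  finally have "Re (integral torus F) = (\<integral>k. cos (dotk (x - y) k) * Wt \<alpha> k \<partial>lborel)" .
  then show ?thesis unfolding R_kernel_def kap_def F_def by simp
qed


lemma sin_int_pi: "sin (real_of_int n * pi) = 0"
  using sin_zero_iff_int2 by blast

lemma cos_lin_int:
  fixes n :: int and c :: real
  shows "integral {-pi..pi} (\<lambda>t. cos (c + real_of_int n * t)) = (if n = 0 then 2*pi*cos c else 0)"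
proof (cases "n = 0")
  case True then show ?thesis by simp
next
  case False
  define F where "F t = sin (c + real_of_int n * t) / real_of_int n" for t
  have d: "(F has_vector_derivative cos (c + real_of_int n * t)) (at t within {-pi..pi})" for t
  proof -
    have "(F has_real_derivative cos (c + real_of_int n * t)) (at t)"
      unfolding F_def using False by (auto intro!: derivative_eq_intros)
    then show ?thesis using has_real_derivative_iff_has_vector_derivative has_vector_derivative_at_within by blast
  qed
  have "((\<lambda>t. cos (c + real_of_int n * t)) has_integral (F pi - F (-pi))) {-pi..pi}"
    by (rule fundamental_theorem_of_calculus) (use d in auto)
  moreover have "F pi - F (-pi) = 0"
  proof -
    have "sin (c + real_of_int n * pi) = sin c * cos (real_of_int n * pi)"
      by (simp add: sin_add sin_int_pi)
    moreover have "sin (c + real_of_int n * (-pi)) = sin c * cos (real_of_int n * pi)"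
      by (simp add: sin_diff sin_int_pi)
    ultimately show ?thesis unfolding F_def by (simp add: diff_divide_distrib[symmetric])
  qed
  ultimately show ?thesis using False by (simp add: integral_unique)
qed

lemma orth_HK:
  fixes m :: pt
  shows "integral torus (\<lambda>k. cos (dotk m k)) = (if m = 0 then (2*pi)^3 else 0)"
proof -
  obtain m1 m2 m3 where m: "m = (m1, m2, m3)" by (cases m) auto
  have dk: "dotk m (k1, k2, k3) = real_of_int m1 * k1 + real_of_int m2 * k2 + real_of_int m3 * k3" for k1 k2 k3
    unfolding dotk_def m by simp
  have c1: "continuous_on S (\<lambda>k. cos (dotk m k))" for S
    by (rule continuous_on_subset[of UNIV]) (intro continuous_intros continuous_on_compose2[OF _ dotk_cont], auto)
  have "integral torus (\<lambda>k. cos (dotk m k))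
     = integral (cbox (-pi) pi) (\<lambda>k1. integral (cbox (-pi, -pi) (pi, pi)) (\<lambda>y. cos (dotk m (k1, y))))"
    unfolding torus_def by (rule integral_prod_continuous[OF c1])
  also have "\<dots> = integral (cbox (-pi) pi) (\<lambda>k1. integral (cbox (-pi) pi) (\<lambda>k2. integral (cbox (-pi) pi)
          (\<lambda>k3. cos ((real_of_int m1 * k1 + real_of_int m2 * k2) + real_of_int m3 * k3))))"
  proof (rule integral_cong)
    fix k1 :: real
    have c2: "continuous_on S (\<lambda>y. cos (dotk m (k1, y)))" for S
      by (rule continuous_on_subset[of UNIV]) (unfold dotk_def, intro continuous_intros, auto)
    show "integral (cbox (-pi, -pi) (pi, pi)) (\<lambda>y. cos (dotk m (k1, y))) = integral (cbox (-pi) pi) (\<lambda>k2. integral (cbox (-pi) pi)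
          (\<lambda>k3. cos ((real_of_int m1 * k1 + real_of_int m2 * k2) + real_of_int m3 * k3)))"
      by (subst integral_prod_continuous[OF c2]) (simp add: dk algebra_simps)
  qed
  also have "\<dots> = (if m = 0 then (2*pi)^3 else 0)"
  proof -
    have i3: "integral {-pi..pi} (\<lambda>k3. cos ((real_of_int m1 * k1 + real_of_int m2 * k2) + real_of_int m3 * k3))
        = (if m3 = 0 then 2*pi*cos (real_of_int m1 * k1 + real_of_int m2 * k2) else 0)" for k1 k2
      by (rule cos_lin_int)
    have i2: "integral {-pi..pi} (\<lambda>k2. integral {-pi..pi} (\<lambda>k3. cos ((real_of_int m1 * k1 + real_of_int m2 * k2) + real_of_int m3 * k3)))
        = (if m3 = 0 \<and> m2 = 0 then (2*pi)^2 * cos (real_of_int m1 * k1) else 0)" for k1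
    proof (cases "m3 = 0")
      case True
      then have "integral {-pi..pi} (\<lambda>k2. integral {-pi..pi} (\<lambda>k3. cos ((real_of_int m1 * k1 + real_of_int m2 * k2) + real_of_int m3 * k3)))
          = integral {-pi..pi} (\<lambda>k2. 2*pi * cos (real_of_int m1 * k1 + real_of_int m2 * k2))" by (simp only: i3) simp
      also have "\<dots> = 2*pi * integral {-pi..pi} (\<lambda>k2. cos (real_of_int m1 * k1 + real_of_int m2 * k2))"
        by (rule integral_mult_right)
      also have "\<dots> = (if m3 = 0 \<and> m2 = 0 then (2*pi)^2 * cos (real_of_int m1 * k1) else 0)"
        using True by (simp add: cos_lin_int power2_eq_square)
      finally show ?thesis .
    next
      case False then show ?thesis by (simp only: i3) simp
    qed
    have i1: "integral {-pi..pi} (\<lambda>k1. integral {-pi..pi} (\<lambda>k2. integral {-pi..pi} (\<lambda>k3. cos ((real_of_int m1 * k1 + real_of_int m2 * k2) + real_of_int m3 * k3))))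
        = (if m3 = 0 \<and> m2 = 0 \<and> m1 = 0 then (2*pi)^3 else 0)"
    proof (cases "m3 = 0 \<and> m2 = 0")
      case True
      then have "integral {-pi..pi} (\<lambda>k1. integral {-pi..pi} (\<lambda>k2. integral {-pi..pi} (\<lambda>k3. cos ((real_of_int m1 * k1 + real_of_int m2 * k2) + real_of_int m3 * k3))))
          = integral {-pi..pi} (\<lambda>k1. (2*pi)^2 * cos (0 + real_of_int m1 * k1))" by (simp only: i2) (simp add: power2_eq_square)
      also have "\<dots> = (2*pi)^2 * integral {-pi..pi} (\<lambda>k1. cos (0 + real_of_int m1 * k1))"
        by (rule integral_mult_right)
      also have "\<dots> = (if m3 = 0 \<and> m2 = 0 \<and> m1 = 0 then (2*pi)^3 else 0)"
        using True by (simp only: cos_lin_int) (simp add: power2_eq_square power3_eq_cube)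
      finally show ?thesis .
    next
      case False then show ?thesis by (simp only: i2) auto
    qed
    show ?thesis unfolding cbox_interval i1 m by (auto simp: zero_prod_def)
  qed
  finally show ?thesis .
qed


lemma infsum_single_pt:
  fixes f :: "'a \<Rightarrow> real"
  assumes "\<And>x. x \<noteq> a \<Longrightarrow> f x = 0" shows "(\<Sum>\<^sub>\<infinity>x. f x) = f a"
proof -
  have "infsum f UNIV = infsum f {a}" by (rule infsum_cong_neutral) (use assms in auto)
  then show ?thesis by simp
qed

definition cF :: "(pt \<Rightarrow> real) \<Rightarrow> real \<times> real \<times> real \<Rightarrow> real" where
  "cF \<phi> k = (\<Sum>\<^sub>\<infinity>x. \<phi> x * cos (dotk x k))"

definition sF :: "(pt \<Rightarrow> real) \<Rightarrow> real \<times> real \<times> real \<Rightarrow> real" where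
  "sF \<phi> k = (\<Sum>\<^sub>\<infinity>x. \<phi> x * sin (dotk x k))"

lemma lborel_sf: "sigma_finite_measure (lborel :: (real\<times>real\<times>real) measure)"
  by (rule lborel.sigma_finite_measure_axioms)

lemma exch_cos:
  assumes "\<phi> summable_on UNIV" "integrable lborel g"
  shows "(\<lambda>x. \<phi> x * (\<integral>k. cos (dotk x k) * g k \<partial>lborel)) summable_on UNIV"
    and "integrable lborel (\<lambda>k. cF \<phi> k * g k)"
    and "(\<Sum>\<^sub>\<infinity>x. \<phi> x * (\<integral>k. cos (dotk x k) * g k \<partial>lborel)) = (\<integral>k. cF \<phi> k * g k \<partial>lborel)"
  using exchange[OF lborel_sf assms(1,2), of "\<lambda>x k. cos (dotk x k)"] unfolding cF_def by auto

lemma exch_sin: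
  assumes "\<phi> summable_on UNIV" "integrable lborel g"
  shows "(\<lambda>x. \<phi> x * (\<integral>k. sin (dotk x k) * g k \<partial>lborel)) summable_on UNIV"
    and "integrable lborel (\<lambda>k. sF \<phi> k * g k)"
    and "(\<Sum>\<^sub>\<infinity>x. \<phi> x * (\<integral>k. sin (dotk x k) * g k \<partial>lborel)) = (\<integral>k. sF \<phi> k * g k \<partial>lborel)"
  using exchange[OF lborel_sf assms(1,2), of "\<lambda>x k. sin (dotk x k)"] unfolding sF_def by auto

lemma int_cos_mult: "integrable lborel g \<Longrightarrow> integrable lborel (\<lambda>k. cos (dotk x k) * g k)"
  by (rule Bochner_Integration.integrable_bound[of _ g]) (auto simp: abs_mult mult_left_le_one_le)

lemma int_sin_mult: "integrable lborel g \<Longrightarrow> integrable lborel (\<lambda>k. sin (dotk x k) * g k)"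
  by (rule Bochner_Integration.integrable_bound[of _ g]) (auto simp: abs_mult mult_left_le_one_le)

lemma R_split:
  assumes a: "0 < \<alpha>" "\<alpha> < 3"
  shows "R_kernel \<alpha> x y = kap \<alpha> * ((\<integral>k. cos (dotk y k) * (cos (dotk x k) * Wt \<alpha> k) \<partial>lborel)
                                     + (\<integral>k. sin (dotk y k) * (sin (dotk x k) * Wt \<alpha> k) \<partial>lborel))"
proof -
  have W: "integrable lborel (Wt \<alpha>)" using Wt_integrable[OF a] .
  have "(\<integral>k. cos (dotk (x - y) k) * Wt \<alpha> k \<partial>lborel)
      = (\<integral>k. cos (dotk y k) * (cos (dotk x k) * Wt \<alpha> k) + sin (dotk y k) * (sin (dotk x k) * Wt \<alpha> k) \<partial>lborel)"
    by (rule Bochner_Integration.integral_cong) (auto simp: dotk_diff cos_diff algebra_simps)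
  also have "\<dots> = (\<integral>k. cos (dotk y k) * (cos (dotk x k) * Wt \<alpha> k) \<partial>lborel)
                   + (\<integral>k. sin (dotk y k) * (sin (dotk x k) * Wt \<alpha> k) \<partial>lborel)"
    by (rule Bochner_Integration.integral_add) (intro int_cos_mult int_sin_mult W)+
  finally show ?thesis using R_repr[OF a] by simp
qed

lemma Rconv_repr:
  assumes a: "0 < \<alpha>" "\<alpha> < 3" and phi: "\<phi> summable_on UNIV"
  shows "Rconv \<alpha> \<phi> x = kap \<alpha> * ((\<integral>k. cF \<phi> k * (cos (dotk x k) * Wt \<alpha> k) \<partial>lborel)
                                + (\<integral>k. sF \<phi> k * (sin (dotk x k) * Wt \<alpha> k) \<partial>lborel))"
proof -
  have W: "integrable lborel (Wt \<alpha>)" using Wt_integrable[OF a] .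
  have g1: "integrable lborel (\<lambda>k. cos (dotk x k) * Wt \<alpha> k)" by (rule int_cos_mult[OF W])
  have g2: "integrable lborel (\<lambda>k. sin (dotk x k) * Wt \<alpha> k)" by (rule int_sin_mult[OF W])
  note e1 = exch_cos[OF phi g1] and e2 = exch_sin[OF phi g2]
  have "Rconv \<alpha> \<phi> x = (\<Sum>\<^sub>\<infinity>y. kap \<alpha> * (\<phi> y * (\<integral>k. cos (dotk y k) * (cos (dotk x k) * Wt \<alpha> k) \<partial>lborel)
                   + \<phi> y * (\<integral>k. sin (dotk y k) * (sin (dotk x k) * Wt \<alpha> k) \<partial>lborel)))"
    unfolding Rconv_def by (rule infsum_cong) (simp add: R_split[OF a] algebra_simps)
  also have "\<dots> = kap \<alpha> * ((\<Sum>\<^sub>\<infinity>y. \<phi> y * (\<integral>k. cos (dotk y k) * (cos (dotk x k) * Wt \<alpha> k) \<partial>lborel))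
                   + (\<Sum>\<^sub>\<infinity>y. \<phi> y * (\<integral>k. sin (dotk y k) * (sin (dotk x k) * Wt \<alpha> k) \<partial>lborel)))"
    by (subst infsum_cmult_right') (simp add: infsum_add[OF e1(1) e2(1)])
  also have "\<dots> = kap \<alpha> * ((\<integral>k. cF \<phi> k * (cos (dotk x k) * Wt \<alpha> k) \<partial>lborel)
                                + (\<integral>k. sF \<phi> k * (sin (dotk x k) * Wt \<alpha> k) \<partial>lborel))"
    using e1(3) e2(3) by simp
  finally show ?thesis .
qed

lemma B_repr:
  assumes a: "0 < \<alpha>" "\<alpha> < 3" and phi: "\<phi> summable_on UNIV" and psi: "\<psi> summable_on UNIV"
  shows "(\<Sum>\<^sub>\<infinity>x. Rconv \<alpha> \<phi> x * \<psi> x) = kap \<alpha> * ((\<integral>k. cF \<psi> k * (cF \<phi> k * Wt \<alpha> k) \<partial>lborel)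
                                + (\<integral>k. sF \<psi> k * (sF \<phi> k * Wt \<alpha> k) \<partial>lborel))"
    and "integrable lborel (\<lambda>k. cF \<psi> k * (cF \<phi> k * Wt \<alpha> k))"
    and "integrable lborel (\<lambda>k. sF \<psi> k * (sF \<phi> k * Wt \<alpha> k))"
    and "integrable lborel (\<lambda>k. cF \<phi> k * Wt \<alpha> k)"
    and "integrable lborel (\<lambda>k. sF \<phi> k * Wt \<alpha> k)"
proof -
  have W: "integrable lborel (Wt \<alpha>)" using Wt_integrable[OF a] .
  have g1: "integrable lborel (\<lambda>k. cF \<phi> k * Wt \<alpha> k)" using exch_cos(2)[OF phi W] .
  have g2: "integrable lborel (\<lambda>k. sF \<phi> k * Wt \<alpha> k)" using exch_sin(2)[OF phi W] .
  show "integrable lborel (\<lambda>k. cF \<phi> k * Wt \<alpha> k)" "integrable lborel (\<lambda>k. sF \<phi> k * Wt \<alpha> k)"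
    using g1 g2 .
  note e1 = exch_cos[OF psi g1] and e2 = exch_sin[OF psi g2]
  show "integrable lborel (\<lambda>k. cF \<psi> k * (cF \<phi> k * Wt \<alpha> k))" using e1(2) .
  show "integrable lborel (\<lambda>k. sF \<psi> k * (sF \<phi> k * Wt \<alpha> k))" using e2(2) .
  have r: "Rconv \<alpha> \<phi> x = kap \<alpha> * ((\<integral>k. cos (dotk x k) * (cF \<phi> k * Wt \<alpha> k) \<partial>lborel)
                                + (\<integral>k. sin (dotk x k) * (sF \<phi> k * Wt \<alpha> k) \<partial>lborel))" for x
    unfolding Rconv_repr[OF a phi] by (simp add: mult_ac)
  have "(\<Sum>\<^sub>\<infinity>x. Rconv \<alpha> \<phi> x * \<psi> x) = (\<Sum>\<^sub>\<infinity>x. kap \<alpha> * (\<psi> x * (\<integral>k. cos (dotk x k) * (cF \<phi> k * Wt \<alpha> k) \<partial>lborel)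
          + \<psi> x * (\<integral>k. sin (dotk x k) * (sF \<phi> k * Wt \<alpha> k) \<partial>lborel)))"
    by (rule infsum_cong) (simp add: r algebra_simps)
  also have "\<dots> = kap \<alpha> * ((\<Sum>\<^sub>\<infinity>x. \<psi> x * (\<integral>k. cos (dotk x k) * (cF \<phi> k * Wt \<alpha> k) \<partial>lborel))
          + (\<Sum>\<^sub>\<infinity>x. \<psi> x * (\<integral>k. sin (dotk x k) * (sF \<phi> k * Wt \<alpha> k) \<partial>lborel)))"
    by (subst infsum_cmult_right') (simp add: infsum_add[OF e1(1) e2(1)])
  also have "\<dots> = kap \<alpha> * ((\<integral>k. cF \<psi> k * (cF \<phi> k * Wt \<alpha> k) \<partial>lborel)
                                + (\<integral>k. sF \<psi> k * (sF \<phi> k * Wt \<alpha> k) \<partial>lborel))"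
    using e1(3) e2(3) by simp
  finally show "(\<Sum>\<^sub>\<infinity>x. Rconv \<alpha> \<phi> x * \<psi> x) = kap \<alpha> * ((\<integral>k. cF \<psi> k * (cF \<phi> k * Wt \<alpha> k) \<partial>lborel)
                                + (\<integral>k. sF \<psi> k * (sF \<phi> k * Wt \<alpha> k) \<partial>lborel))" .
qed

lemma summ_cos: "\<phi> summable_on UNIV \<Longrightarrow> (\<lambda>x. \<phi> x * cos (dotk x k)) summable_on UNIV"
proof (rule summable_bound[OF summable_abs])
  fix x
  have "\<bar>cos (dotk x k)\<bar> \<le> 1" by simp
  then show "\<bar>\<phi> x * cos (dotk x k)\<bar> \<le> \<bar>\<phi> x\<bar>" by (simp add: abs_mult mult_right_le_one_le)
qed

lemma summ_sin: "\<phi> summable_on UNIV \<Longrightarrow> (\<lambda>x. \<phi> x * sin (dotk x k)) summable_on UNIV"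
proof (rule summable_bound[OF summable_abs])
  fix x
  have "\<bar>sin (dotk x k)\<bar> \<le> 1" by simp
  then show "\<bar>\<phi> x * sin (dotk x k)\<bar> \<le> \<bar>\<phi> x\<bar>" by (simp add: abs_mult mult_right_le_one_le)
qed

lemma cF_lin:
  assumes "f summable_on UNIV" "g summable_on UNIV"
  shows "cF (\<lambda>x. X * f x + Y * g x) k = X * cF f k + Y * cF g k"
proof -
  have "cF (\<lambda>x. X * f x + Y * g x) k = (\<Sum>\<^sub>\<infinity>x. X * (f x * cos (dotk x k)) + Y * (g x * cos (dotk x k)))"
    unfolding cF_def by (rule infsum_cong) (simp add: algebra_simps)
  also have "\<dots> = (\<Sum>\<^sub>\<infinity>x. X * (f x * cos (dotk x k))) + (\<Sum>\<^sub>\<infinity>x. Y * (g x * cos (dotk x k)))"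
    by (rule infsum_add) (intro summable_on_cmult_right summ_cos assms)+
  also have "\<dots> = X * cF f k + Y * cF g k" unfolding cF_def by (simp add: infsum_cmult_right')
  finally show ?thesis .
qed

lemma sF_lin:
  assumes "f summable_on UNIV" "g summable_on UNIV"
  shows "sF (\<lambda>x. X * f x + Y * g x) k = X * sF f k + Y * sF g k"
proof -
  have "sF (\<lambda>x. X * f x + Y * g x) k = (\<Sum>\<^sub>\<infinity>x. X * (f x * sin (dotk x k)) + Y * (g x * sin (dotk x k)))"
    unfolding sF_def by (rule infsum_cong) (simp add: algebra_simps)
  also have "\<dots> = (\<Sum>\<^sub>\<infinity>x. X * (f x * sin (dotk x k))) + (\<Sum>\<^sub>\<infinity>x. Y * (g x * sin (dotk x k)))"
    by (rule infsum_add) (intro summable_on_cmult_right summ_sin assms)+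
  also have "\<dots> = X * sF f k + Y * sF g k" unfolding sF_def by (simp add: infsum_cmult_right')
  finally show ?thesis .
qed

lemma ind_torus_int: "integrable lborel (\<lambda>k. indicator torus k :: real)"
  using borel_integrable_compact[of torus "\<lambda>_. 1::real"] unfolding torus_def by simp

lemma orth_L:
  "(\<integral>k. cos (dotk m k) * indicator torus k \<partial>lborel) = (if m = 0 then (2*pi)^3 else 0)"
proof -
  have c: "continuous_on torus (\<lambda>k. cos (dotk m k))"
    by (rule continuous_on_subset[of UNIV]) (intro continuous_intros continuous_on_compose2[OF _ dotk_cont], auto)
  have si: "set_integrable lborel torus (\<lambda>k. cos (dotk m k))"
    unfolding set_integrable_def using borel_integrable_compact[OF _ c] unfolding torus_def by simp
  have "(\<integral>k. cos (dotk m k) * indicator torus k \<partial>lborel) = set_lebesgue_integral lborel torus (\<lambda>k. cos (dotk m k))"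
    unfolding set_lebesgue_integral_def by (simp add: mult.commute)
  also have "\<dots> = integral torus (\<lambda>k. cos (dotk m k))" by (rule set_borel_integral_eq_integral(2)[OF si])
  finally show ?thesis using orth_HK by simp
qed

lemma B_pos:
  assumes a: "0 < \<alpha>" "\<alpha> < 3" and phi: "\<phi> summable_on UNIV" and nz: "\<phi> \<noteq> (\<lambda>_. 0)"
  shows "(\<Sum>\<^sub>\<infinity>x. Rconv \<alpha> \<phi> x * \<phi> x) > 0"
proof -
  note Br = B_repr[OF a phi phi]
  define H where "H k = cF \<phi> k * (cF \<phi> k * Wt \<alpha> k) + sF \<phi> k * (sF \<phi> k * Wt \<alpha> k)" for k
  have Hi: "integrable lborel H" unfolding H_def using Br(2,3) by simp
  have Hn: "H k \<ge> 0" for k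
  proof -
    have "H k = ((cF \<phi> k)^2 + (sF \<phi> k)^2) * Wt \<alpha> k" unfolding H_def by (simp add: algebra_simps power2_eq_square)
    then show ?thesis using Wt_nonneg[of \<alpha> k] by simp
  qed
  have B: "(\<Sum>\<^sub>\<infinity>x. Rconv \<alpha> \<phi> x * \<phi> x) = kap \<alpha> * (\<integral>k. H k \<partial>lborel)"
    unfolding Br(1) H_def by (subst Bochner_Integration.integral_add) (use Br(2,3) in auto)
  have I0: "(\<integral>k. H k \<partial>lborel) \<ge> 0" using Hn by simp
  have "(\<integral>k. H k \<partial>lborel) \<noteq> 0"
  proof
    assume "(\<integral>k. H k \<partial>lborel) = 0"
    then have "AE k in lborel. H k = 0" using integral_nonneg_eq_0_iff_AE[OF Hi] Hn by simp
    moreover have "AE k in lborel. k \<noteq> (0::real\<times>real\<times>real)"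
      by (rule AE_I'[of "{0}"]) (auto intro: countable_imp_null_set_lborel)
    ultimately have AEz: "AE k in lborel. k \<in> torus \<longrightarrow> cF \<phi> k = 0 \<and> sF \<phi> k = 0"
    proof eventually_elim
      case (elim k)
      show ?case
      proof
        assume kt: "k \<in> torus"
        have "Wt \<alpha> k > 0" unfolding Wt_def wt_def using kt symb_pos[OF kt elim(2)] by simp
        moreover have "H k = ((cF \<phi> k)^2 + (sF \<phi> k)^2) * Wt \<alpha> k" unfolding H_def by (simp add: algebra_simps power2_eq_square)
        ultimately have "(cF \<phi> k)^2 + (sF \<phi> k)^2 = 0" using elim(1) by simp
        then show "cF \<phi> k = 0 \<and> sF \<phi> k = 0" by (simp add: sum_power2_eq_zero_iff)
      qed
    qed
    have "\<exists>x0. \<phi> x0 \<noteq> 0"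
    proof (rule ccontr)
      assume "\<not> (\<exists>x0. \<phi> x0 \<noteq> 0)"
      then have "\<phi> = (\<lambda>_. 0)" by auto
      then show False using nz by simp
    qed
    then obtain x0 where x0: "\<phi> x0 \<noteq> 0" by blast
    have T: "integrable lborel (\<lambda>k. indicator torus k :: real)" by (rule ind_torus_int)
    have g1: "integrable lborel (\<lambda>k. cos (dotk x0 k) * indicator torus k)" by (rule int_cos_mult[OF T])
    have g2: "integrable lborel (\<lambda>k. sin (dotk x0 k) * indicator torus k)" by (rule int_sin_mult[OF T])
    note e1 = exch_cos[OF phi g1] and e2 = exch_sin[OF phi g2]
    have z1: "(\<integral>k. cF \<phi> k * (cos (dotk x0 k) * indicator torus k) \<partial>lborel) = 0"
      by (rule integral_eq_zero_AE) (use AEz in \<open>eventually_elim, auto simp: indicator_def\<close>)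
    have z2: "(\<integral>k. sF \<phi> k * (sin (dotk x0 k) * indicator torus k) \<partial>lborel) = 0"
      by (rule integral_eq_zero_AE) (use AEz in \<open>eventually_elim, auto simp: indicator_def\<close>)
    have each: "(\<integral>k. cos (dotk x k) * (cos (dotk x0 k) * indicator torus k) \<partial>lborel)
        + (\<integral>k. sin (dotk x k) * (sin (dotk x0 k) * indicator torus k) \<partial>lborel)
        = (if x = x0 then (2*pi)^3 else 0)" for x
    proof -
      have "(\<integral>k. cos (dotk x k) * (cos (dotk x0 k) * indicator torus k) \<partial>lborel)
        + (\<integral>k. sin (dotk x k) * (sin (dotk x0 k) * indicator torus k) \<partial>lborel)
        = (\<integral>k. cos (dotk x k) * (cos (dotk x0 k) * indicator torus k) + sin (dotk x k) * (sin (dotk x0 k) * indicator torus k) \<partial>lborel)"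
        by (rule Bochner_Integration.integral_add[symmetric]) (intro int_cos_mult int_sin_mult g1 g2)+
      also have "\<dots> = (\<integral>k. cos (dotk (x - x0) k) * indicator torus k \<partial>lborel)"
        by (rule Bochner_Integration.integral_cong) (auto simp: dotk_diff cos_diff algebra_simps)
      also have "\<dots> = (if x = x0 then (2*pi)^3 else 0)" by (simp add: orth_L)
      finally show ?thesis .
    qed
    have "0 = (\<Sum>\<^sub>\<infinity>x. \<phi> x * (\<integral>k. cos (dotk x k) * (cos (dotk x0 k) * indicator torus k) \<partial>lborel))
            + (\<Sum>\<^sub>\<infinity>x. \<phi> x * (\<integral>k. sin (dotk x k) * (sin (dotk x0 k) * indicator torus k) \<partial>lborel))"
      using e1(3) e2(3) z1 z2 by simp
    also have "\<dots> = (\<Sum>\<^sub>\<infinity>x. \<phi> x * (if x = x0 then (2*pi)^3 else 0))"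
      by (subst infsum_add[OF e1(1) e2(1), symmetric]) (simp add: distrib_left[symmetric] each)
    also have "\<dots> = \<phi> x0 * (2*pi)^3" by (subst infsum_single_pt[where a=x0]) auto
    finally show False using x0 by simp
  qed
  then have "(\<integral>k. H k \<partial>lborel) > 0" using I0 by simp
  then show ?thesis unfolding B using kap_pos[OF a(1)] by simp
qed


definition gam :: "(pt \<Rightarrow> real) \<Rightarrow> (pt \<Rightarrow> real) \<Rightarrow> pt \<Rightarrow> real" where
  "gam v \<phi> x = (1/2) * (\<Sum>y\<in>nbrs x. (v y - v x) * (\<phi> y - \<phi> x))"

lemma grad_inner_gam: "grad_inner v \<phi> = (\<Sum>\<^sub>\<infinity>x. gam v \<phi> x)"
  unfolding grad_inner_def gam_def ..

lemma grad_sq_gam: "grad_sq v x = gam v v x"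
  unfolding grad_sq_def gam_def by (simp add: power2_eq_square)

lemma le_infsum_pt:
  fixes f :: "'a \<Rightarrow> real"
  assumes "f summable_on UNIV" "\<And>x. f x \<ge> 0" shows "f a \<le> (\<Sum>\<^sub>\<infinity>x. f x)"
proof -
  have "infsum f {a} \<le> infsum f UNIV"
    by (rule infsum_mono_neutral) (use assms in auto)
  then show ?thesis by simp
qed

lemma infsum_pos_pt:
  fixes f :: "'a \<Rightarrow> real"
  assumes "f summable_on UNIV" "\<And>x. f x \<ge> 0" "f a > 0" shows "(\<Sum>\<^sub>\<infinity>x. f x) > 0"
  using le_infsum_pt[OF assms(1,2)] assms(3) by (metis order_less_le_trans)

lemma summable_nonneg_le:
  fixes f g :: "'a \<Rightarrow> real"
  assumes "g summable_on UNIV" "\<And>x. 0 \<le> f x" "\<And>x. f x \<le> g x" shows "f summable_on UNIV"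
  by (rule summable_bound[OF assms(1)]) (use assms in auto)

lemma max_lip: "(max a 0 - max b (0::real))^2 \<le> (a - b)^2"
proof -
  have "\<bar>max a 0 - max b 0\<bar> \<le> \<bar>a - b\<bar>" by (simp add: max_def abs_if)
  then show ?thesis by (simp add: abs_le_square_iff)
qed

lemma min_lip: "(min a 0 - min b (0::real))^2 \<le> (a - b)^2"
proof -
  have "\<bar>min a 0 - min b 0\<bar> \<le> \<bar>a - b\<bar>" by (simp add: min_def abs_if)
  then show ?thesis by (simp add: abs_le_square_iff)
qed

lemma cross_bounds:
  fixes a b :: real
  shows "0 \<le> (max a 0 - max b 0) * (min a 0 - min b 0)"
    and "(max a 0 - max b 0) * (min a 0 - min b 0) \<le> (a - b)^2"
proof -
  show c: "0 \<le> (max a 0 - max b 0) * (min a 0 - min b 0)"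
  proof (cases "a \<ge> b")
    case True
    then have "max a 0 - max b 0 \<ge> 0" "min a 0 - min b 0 \<ge> 0" by auto
    then show ?thesis by simp
  next
    case False
    then have "max a 0 - max b 0 \<le> 0" "min a 0 - min b 0 \<le> 0" by auto
    then show ?thesis by (simp add: mult_nonpos_nonpos)
  qed
  define x where "x = max a 0 - max b 0"
  define y where "y = min a 0 - min b 0"
  have d: "a - b = x + y" unfolding x_def y_def by auto
  have e: "(x + y)^2 = x^2 + 2 * (x * y) + y^2" by (simp add: power2_eq_square algebra_simps)
  have "x^2 \<ge> 0" "y^2 \<ge> 0" "x * y \<ge> 0" using c by (auto simp: x_def y_def)
  then have "x * y \<le> (x + y)^2" using e by linarith
  then show "(max a 0 - max b 0) * (min a 0 - min b 0) \<le> (a - b)^2" using d by (simp add: x_def y_def)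
qed

lemma gsq_nonneg: "grad_sq v x \<ge> 0"
  unfolding grad_sq_def by (simp add: sum_nonneg)

lemma gsq_comb: "grad_sq (\<lambda>x. s * f x + t * g x) x = s^2 * grad_sq f x + 2 * s * t * gam f g x + t^2 * grad_sq g x"
proof -
  have "grad_sq (\<lambda>x. s * f x + t * g x) x = (1/2) * (\<Sum>y\<in>nbrs x. s^2 * (f y - f x)^2 + 2 * s * t * ((f y - f x) * (g y - g x)) + t^2 * (g y - g x)^2)"
    unfolding grad_sq_def by (rule arg_cong[where f="\<lambda>z. (1/2) * z"], rule sum.cong) (auto simp: power2_eq_square algebra_simps)
  also have "\<dots> = s^2 * grad_sq f x + 2 * s * t * gam f g x + t^2 * grad_sq g x"
    unfolding grad_sq_def gam_def sum.distrib sum_distrib_left[symmetric] by (simp add: algebra_simps)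
  finally show ?thesis .
qed

lemma gam_comb1: "gam (\<lambda>x. s * f x + t * g x) (\<lambda>x. s * f x) x = s^2 * grad_sq f x + s * t * gam f g x"
proof -
  have "gam (\<lambda>x. s * f x + t * g x) (\<lambda>x. s * f x) x = (1/2) * (\<Sum>y\<in>nbrs x. s^2 * (f y - f x)^2 + s * t * ((f y - f x) * (g y - g x)))"
    unfolding gam_def by (rule arg_cong[where f="\<lambda>z. (1/2) * z"], rule sum.cong) (auto simp: power2_eq_square algebra_simps)
  also have "\<dots> = s^2 * grad_sq f x + s * t * gam f g x"
    unfolding grad_sq_def gam_def sum.distrib sum_distrib_left[symmetric] by (simp add: algebra_simps)
  finally show ?thesis .
qed

lemma gam_comb2: "gam (\<lambda>x. s * f x + t * g x) (\<lambda>x. t * g x) x = t^2 * grad_sq g x + s * t * gam f g x"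
proof -
  have "gam (\<lambda>x. s * f x + t * g x) (\<lambda>x. t * g x) x = (1/2) * (\<Sum>y\<in>nbrs x. t^2 * (g y - g x)^2 + s * t * ((f y - f x) * (g y - g x)))"
    unfolding gam_def by (rule arg_cong[where f="\<lambda>z. (1/2) * z"], rule sum.cong) (auto simp: power2_eq_square algebra_simps)
  also have "\<dots> = t^2 * grad_sq g x + s * t * gam f g x"
    unfolding grad_sq_def gam_def sum.distrib sum_distrib_left[symmetric] by (simp add: algebra_simps)
  finally show ?thesis .
qed

lemma posp_negp_mult: "posp u x * negp u x = 0"
  unfolding posp_def negp_def by (auto simp: max_def min_def)

lemma gsq_posp_le: "grad_sq (posp u) x \<le> grad_sq u x"
  unfolding grad_sq_def posp_def by (intro mult_left_mono sum_mono max_lip) auto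

lemma gsq_negp_le: "grad_sq (negp u) x \<le> grad_sq u x"
  unfolding grad_sq_def negp_def by (intro mult_left_mono sum_mono min_lip) auto

lemma gam_pn_nonneg: "gam (posp u) (negp u) x \<ge> 0"
  unfolding gam_def posp_def negp_def by (intro mult_nonneg_nonneg sum_nonneg cross_bounds(1)) auto

lemma gam_pn_le: "gam (posp u) (negp u) x \<le> grad_sq u x"
  unfolding gam_def grad_sq_def posp_def negp_def by (intro mult_left_mono sum_mono cross_bounds(2)) auto

lemma abs_powr_sq: fixes z p :: real shows "\<bar>z\<bar> powr (p - 2) * z * z = \<bar>z\<bar> powr p"
proof (cases "z = 0")
  case True then show ?thesis by simp
next
  case False
  have e1: "z * z = \<bar>z\<bar> powr 2" using False by (simp add: powr_numeral power2_eq_square abs_mult_self_eq)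
  have "\<bar>z\<bar> powr (p - 2) * z * z = \<bar>z\<bar> powr (p - 2) * \<bar>z\<bar> powr 2" by (simp only: mult.assoc e1)
  also have "\<dots> = \<bar>z\<bar> powr (p - 2 + 2)" by (simp only: powr_add)
  also have "\<dots> = \<bar>z\<bar> powr p" by simp
  finally show ?thesis .
qed

lemma powr_mult_abs: "0 \<le> s \<Longrightarrow> \<bar>s * v\<bar> powr p = s powr p * \<bar>v\<bar> powr (p::real)"
  by (simp add: abs_mult powr_mult)

lemma pw_abs_powr:
  fixes s t v p :: real assumes "0 \<le> s" "0 \<le> t"
  shows "\<bar>s * max v 0 + t * min v 0\<bar> powr p = s powr p * \<bar>max v 0\<bar> powr p + t powr p * \<bar>min v 0\<bar> powr p"
proof (cases "v \<ge> 0")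
  case True
  then have "s * max v 0 + t * min v 0 = s * v" "max v 0 = v" "min v 0 = 0" by auto
  then show ?thesis using assms powr_mult_abs[of s v p] by simp
next
  case False
  then have "s * max v 0 + t * min v 0 = t * v" "max v 0 = 0" "min v 0 = v" by auto
  then show ?thesis using assms powr_mult_abs[of t v p] by simp
qed

lemma pw_der1:
  fixes s t v p :: real assumes "0 \<le> s" "0 \<le> t"
  shows "\<bar>s * max v 0 + t * min v 0\<bar> powr (p - 2) * (s * max v 0 + t * min v 0) * (s * max v 0)
       = s powr p * \<bar>max v 0\<bar> powr p"
proof (cases "v \<ge> 0")
  case True
  then have e: "max v 0 = v" "min v 0 = 0" by auto
  have "\<bar>s * v\<bar> powr (p - 2) * (s * v) * (s * v) = \<bar>s * v\<bar> powr p" by (rule abs_powr_sq)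
  then show ?thesis unfolding e using powr_mult_abs[OF assms(1), of v p] by simp
next
  case False then show ?thesis by simp
qed

lemma pw_der2:
  fixes s t v p :: real assumes "0 \<le> s" "0 \<le> t"
  shows "\<bar>s * max v 0 + t * min v 0\<bar> powr (p - 2) * (s * max v 0 + t * min v 0) * (t * min v 0)
       = t powr p * \<bar>min v 0\<bar> powr p"
proof (cases "v \<ge> 0")
  case False
  then have e: "max v 0 = 0" "min v 0 = v" by auto
  have "\<bar>t * v\<bar> powr (p - 2) * (t * v) * (t * v) = \<bar>t * v\<bar> powr p" by (rule abs_powr_sq)
  then show ?thesis unfolding e using powr_mult_abs[OF assms(2), of v p] by simp
next
  case True then show ?thesis by simp
qed

lemma pw_posp: assumes "0 \<le> s" "0 \<le> t" shows "max (s * max v 0 + t * min v 0) 0 = s * max v (0::real)"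
proof (cases "v \<ge> 0")
  case True
  then have "s * max v 0 + t * min v 0 = s * v" "max v 0 = v" "s * v \<ge> 0" using assms by auto
  then show ?thesis by simp
next
  case False
  then have "s * max v 0 + t * min v 0 = t * v" "max v 0 = 0" "t * v \<le> 0" using assms by (auto simp: mult_nonneg_nonpos)
  then show ?thesis by simp
qed

lemma pw_negp: assumes "0 \<le> s" "0 \<le> t" shows "min (s * max v 0 + t * min v 0) 0 = t * min v (0::real)"
proof (cases "v \<ge> 0")
  case True
  then have "s * max v 0 + t * min v 0 = s * v" "min v 0 = 0" "s * v \<ge> 0" using assms by auto
  then show ?thesis by simp
next
  case False
  then have "s * max v 0 + t * min v 0 = t * v" "min v 0 = v" "t * v \<le> 0" using assms by (auto simp: mult_nonneg_nonpos)
  then show ?thesis by simp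
qed


definition BB :: "real \<Rightarrow> (pt \<Rightarrow> real) \<Rightarrow> (pt \<Rightarrow> real) \<Rightarrow> real" where
  "BB \<alpha> \<psi> \<phi> = (\<Sum>\<^sub>\<infinity>x. Rconv \<alpha> \<phi> x * \<psi> x)"

lemma int_lin4:
  fixes f1 f2 f3 f4 :: "'a \<Rightarrow> real"
  assumes "integrable M f1" "integrable M f2" "integrable M f3" "integrable M f4"
  shows "(\<integral>k. c1 * f1 k + c2 * f2 k + c3 * f3 k + c4 * f4 k \<partial>M)
       = c1 * integral\<^sup>L M f1 + c2 * integral\<^sup>L M f2 + c3 * integral\<^sup>L M f3 + c4 * integral\<^sup>L M f4"
  using assms by simp

lemma BB_bilin:
  assumes a: "0 < \<alpha>" "\<alpha> < 3" and f: "f summable_on UNIV" and g: "g summable_on UNIV"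
  shows "BB \<alpha> (\<lambda>x. X * f x + Y * g x) (\<lambda>x. X' * f x + Y' * g x)
       = X * X' * BB \<alpha> f f + X * Y' * BB \<alpha> f g + Y * X' * BB \<alpha> g f + Y * Y' * BB \<alpha> g g"
proof -
  have s1: "(\<lambda>x. X * f x + Y * g x) summable_on UNIV" using f g by (intro summable_on_add summable_on_cmult_right)
  have s2: "(\<lambda>x. X' * f x + Y' * g x) summable_on UNIV" using f g by (intro summable_on_add summable_on_cmult_right)
  note ff = B_repr[OF a f f] and fg = B_repr[OF a g f] and gf = B_repr[OF a f g] and gg = B_repr[OF a g g]
  have c: "(\<integral>k. cF (\<lambda>x. X * f x + Y * g x) k * (cF (\<lambda>x. X' * f x + Y' * g x) k * Wt \<alpha> k) \<partial>lborel)
     = X * X' * (\<integral>k. cF f k * (cF f k * Wt \<alpha> k) \<partial>lborel) + X * Y' * (\<integral>k. cF f k * (cF g k * Wt \<alpha> k) \<partial>lborel)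
       + Y * X' * (\<integral>k. cF g k * (cF f k * Wt \<alpha> k) \<partial>lborel) + Y * Y' * (\<integral>k. cF g k * (cF g k * Wt \<alpha> k) \<partial>lborel)"
    (is "_ = ?R")
  proof -
    have "(\<integral>k. cF (\<lambda>x. X * f x + Y * g x) k * (cF (\<lambda>x. X' * f x + Y' * g x) k * Wt \<alpha> k) \<partial>lborel)
      = (\<integral>k. (X * X') * (cF f k * (cF f k * Wt \<alpha> k)) + (X * Y') * (cF f k * (cF g k * Wt \<alpha> k))
           + (Y * X') * (cF g k * (cF f k * Wt \<alpha> k)) + (Y * Y') * (cF g k * (cF g k * Wt \<alpha> k)) \<partial>lborel)"
      by (rule Bochner_Integration.integral_cong) (auto simp: cF_lin[OF f g] algebra_simps)
    also have "\<dots> = ?R" by (rule int_lin4) (use ff(2) fg(2) gf(2) gg(2) in auto)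
    finally show ?thesis .
  qed
  have s: "(\<integral>k. sF (\<lambda>x. X * f x + Y * g x) k * (sF (\<lambda>x. X' * f x + Y' * g x) k * Wt \<alpha> k) \<partial>lborel)
     = X * X' * (\<integral>k. sF f k * (sF f k * Wt \<alpha> k) \<partial>lborel) + X * Y' * (\<integral>k. sF f k * (sF g k * Wt \<alpha> k) \<partial>lborel)
       + Y * X' * (\<integral>k. sF g k * (sF f k * Wt \<alpha> k) \<partial>lborel) + Y * Y' * (\<integral>k. sF g k * (sF g k * Wt \<alpha> k) \<partial>lborel)"
    (is "_ = ?R")
  proof -
    have "(\<integral>k. sF (\<lambda>x. X * f x + Y * g x) k * (sF (\<lambda>x. X' * f x + Y' * g x) k * Wt \<alpha> k) \<partial>lborel)
      = (\<integral>k. (X * X') * (sF f k * (sF f k * Wt \<alpha> k)) + (X * Y') * (sF f k * (sF g k * Wt \<alpha> k))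
           + (Y * X') * (sF g k * (sF f k * Wt \<alpha> k)) + (Y * Y') * (sF g k * (sF g k * Wt \<alpha> k)) \<partial>lborel)"
      by (rule Bochner_Integration.integral_cong) (auto simp: sF_lin[OF f g] algebra_simps)
    also have "\<dots> = ?R" by (rule int_lin4) (use ff(3) fg(3) gf(3) gg(3) in auto)
    finally show ?thesis .
  qed
  show ?thesis
    unfolding BB_def B_repr(1)[OF a s2 s1] B_repr(1)[OF a f f] B_repr(1)[OF a g f] B_repr(1)[OF a f g] B_repr(1)[OF a g g] c s
    by (simp add: algebra_simps)
qed

lemma BB_sym:
  assumes a: "0 < \<alpha>" "\<alpha> < 3" and f: "f summable_on UNIV" and g: "g summable_on UNIV"
  shows "BB \<alpha> f g = BB \<alpha> g f"
  unfolding BB_def B_repr(1)[OF a f g] B_repr(1)[OF a g f] by (simp add: mult_ac)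

lemma BB_pos:
  assumes a: "0 < \<alpha>" "\<alpha> < 3" and f: "f summable_on UNIV" and nz: "f \<noteq> (\<lambda>_. 0)"
  shows "BB \<alpha> f f > 0"
  unfolding BB_def using B_pos[OF a f nz] .


lemma has_sum_infsum_real: "(f::'a \<Rightarrow> real) summable_on UNIV \<Longrightarrow> (f has_sum (\<Sum>\<^sub>\<infinity>x. f x)) UNIV"
  by (simp add: summable_iff_has_sum_infsum)

lemma infsum_lin2:
  fixes f1 f2 :: "'a \<Rightarrow> real"
  assumes "f1 summable_on UNIV" "f2 summable_on UNIV"
  shows "(\<Sum>\<^sub>\<infinity>x. c1 * f1 x + c2 * f2 x) = c1 * (\<Sum>\<^sub>\<infinity>x. f1 x) + c2 * (\<Sum>\<^sub>\<infinity>x. f2 x)"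
    and "(\<lambda>x. c1 * f1 x + c2 * f2 x) summable_on UNIV"
proof -
  have "((\<lambda>x. c1 * f1 x + c2 * f2 x) has_sum (c1 * (\<Sum>\<^sub>\<infinity>x. f1 x) + c2 * (\<Sum>\<^sub>\<infinity>x. f2 x))) UNIV"
    using assms by (intro has_sum_add has_sum_cmult_right has_sum_infsum_real)
  then show "(\<Sum>\<^sub>\<infinity>x. c1 * f1 x + c2 * f2 x) = c1 * (\<Sum>\<^sub>\<infinity>x. f1 x) + c2 * (\<Sum>\<^sub>\<infinity>x. f2 x)"
    and "(\<lambda>x. c1 * f1 x + c2 * f2 x) summable_on UNIV"
    by (auto simp: infsumI summable_on_def)
qed

lemma infsum_lin3:
  fixes f1 f2 f3 :: "'a \<Rightarrow> real"
  assumes "f1 summable_on UNIV" "f2 summable_on UNIV" "f3 summable_on UNIV"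
  shows "(\<Sum>\<^sub>\<infinity>x. c1 * f1 x + c2 * f2 x + c3 * f3 x) = c1 * (\<Sum>\<^sub>\<infinity>x. f1 x) + c2 * (\<Sum>\<^sub>\<infinity>x. f2 x) + c3 * (\<Sum>\<^sub>\<infinity>x. f3 x)"
    and "(\<lambda>x. c1 * f1 x + c2 * f2 x + c3 * f3 x) summable_on UNIV"
proof -
  have "((\<lambda>x. c1 * f1 x + c2 * f2 x + c3 * f3 x) has_sum (c1 * (\<Sum>\<^sub>\<infinity>x. f1 x) + c2 * (\<Sum>\<^sub>\<infinity>x. f2 x) + c3 * (\<Sum>\<^sub>\<infinity>x. f3 x))) UNIV"
    using assms by (intro has_sum_add has_sum_cmult_right has_sum_infsum_real)
  then show "(\<Sum>\<^sub>\<infinity>x. c1 * f1 x + c2 * f2 x + c3 * f3 x) = c1 * (\<Sum>\<^sub>\<infinity>x. f1 x) + c2 * (\<Sum>\<^sub>\<infinity>x. f2 x) + c3 * (\<Sum>\<^sub>\<infinity>x. f3 x)"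
    and "(\<lambda>x. c1 * f1 x + c2 * f2 x + c3 * f3 x) summable_on UNIV"
    by (auto simp: infsumI summable_on_def)
qed

lemma infsum_lin5:
  fixes f1 f2 f3 f4 f5 :: "'a \<Rightarrow> real"
  assumes "f1 summable_on UNIV" "f2 summable_on UNIV" "f3 summable_on UNIV" "f4 summable_on UNIV" "f5 summable_on UNIV"
  shows "(\<Sum>\<^sub>\<infinity>x. c1 * f1 x + c2 * f2 x + c3 * f3 x + c4 * f4 x + c5 * f5 x)
     = c1 * (\<Sum>\<^sub>\<infinity>x. f1 x) + c2 * (\<Sum>\<^sub>\<infinity>x. f2 x) + c3 * (\<Sum>\<^sub>\<infinity>x. f3 x) + c4 * (\<Sum>\<^sub>\<infinity>x. f4 x) + c5 * (\<Sum>\<^sub>\<infinity>x. f5 x)"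
    and "(\<lambda>x. c1 * f1 x + c2 * f2 x + c3 * f3 x + c4 * f4 x + c5 * f5 x) summable_on UNIV"
proof -
  have "((\<lambda>x. c1 * f1 x + c2 * f2 x + c3 * f3 x + c4 * f4 x + c5 * f5 x) has_sum
     (c1 * (\<Sum>\<^sub>\<infinity>x. f1 x) + c2 * (\<Sum>\<^sub>\<infinity>x. f2 x) + c3 * (\<Sum>\<^sub>\<infinity>x. f3 x) + c4 * (\<Sum>\<^sub>\<infinity>x. f4 x) + c5 * (\<Sum>\<^sub>\<infinity>x. f5 x))) UNIV"
    using assms by (intro has_sum_add has_sum_cmult_right has_sum_infsum_real)
  then show "(\<Sum>\<^sub>\<infinity>x. c1 * f1 x + c2 * f2 x + c3 * f3 x + c4 * f4 x + c5 * f5 x)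
     = c1 * (\<Sum>\<^sub>\<infinity>x. f1 x) + c2 * (\<Sum>\<^sub>\<infinity>x. f2 x) + c3 * (\<Sum>\<^sub>\<infinity>x. f3 x) + c4 * (\<Sum>\<^sub>\<infinity>x. f4 x) + c5 * (\<Sum>\<^sub>\<infinity>x. f5 x)"
    and "(\<lambda>x. c1 * f1 x + c2 * f2 x + c3 * f3 x + c4 * f4 x + c5 * f5 x) summable_on UNIV"
    by (auto simp: infsumI summable_on_def)
qed

locale setting =
  fixes a b \<alpha> p h0 :: real and h u :: "pt \<Rightarrow> real"
  assumes a: "a > 0" and b: "b > 0" and \<alpha>1: "0 < \<alpha>" and \<alpha>2: "\<alpha> < 3" and p: "p > 4"
    and h0: "h0 > 0" and hh: "\<forall>x. h x \<ge> h0"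
    and uH: "u \<in> Hsp h" and upz: "posp u \<noteq> (\<lambda>_. 0)" and unz: "negp u \<noteq> (\<lambda>_. 0)"
begin

abbreviation "up \<equiv> posp u"
abbreviation "un \<equiv> negp u"
definition "fp = (\<lambda>x. \<bar>up x\<bar> powr p)"
definition "fn = (\<lambda>x. \<bar>un x\<bar> powr p)"

lemma h_nonneg: "h x \<ge> 0" using hh h0 by (meson less_eq_real_def order_trans)

lemma S_H1: "(\<lambda>x. grad_sq u x + (u x)^2) summable_on UNIV" using uH by (simp add: Hsp_def H1_def)
lemma S_hu: "(\<lambda>x. h x * (u x)^2) summable_on UNIV" using uH by (simp add: Hsp_def)
lemma S_u2: "(\<lambda>x. (u x)^2) summable_on UNIV"
  by (rule summable_nonneg_le[OF S_H1]) (auto simp: gsq_nonneg)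
lemma S_gu: "grad_sq u summable_on UNIV"
  by (rule summable_nonneg_le[OF S_H1]) (auto simp: gsq_nonneg)
lemma S_gp: "grad_sq up summable_on UNIV"
  by (rule summable_nonneg_le[OF S_gu]) (auto simp: gsq_nonneg gsq_posp_le)
lemma S_gn: "grad_sq un summable_on UNIV"
  by (rule summable_nonneg_le[OF S_gu]) (auto simp: gsq_nonneg gsq_negp_le)
lemma S_gam: "gam up un summable_on UNIV"
  by (rule summable_nonneg_le[OF S_gu]) (auto simp: gam_pn_nonneg gam_pn_le)
lemma up2_le: "(up x)^2 \<le> (u x)^2" unfolding posp_def by (auto simp: max_def abs_le_iff)
lemma un2_le: "(un x)^2 \<le> (u x)^2" unfolding negp_def by (auto simp: min_def abs_le_iff)
lemma S_up2: "(\<lambda>x. (up x)^2) summable_on UNIV"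
  by (rule summable_nonneg_le[OF S_u2]) (auto simp: up2_le)
lemma S_un2: "(\<lambda>x. (un x)^2) summable_on UNIV"
  by (rule summable_nonneg_le[OF S_u2]) (auto simp: un2_le)
lemma S_hup: "(\<lambda>x. h x * (up x)^2) summable_on UNIV"
  by (rule summable_nonneg_le[OF S_hu]) (auto simp: up2_le h_nonneg mult_left_mono)
lemma S_hun: "(\<lambda>x. h x * (un x)^2) summable_on UNIV"
  by (rule summable_nonneg_le[OF S_hu]) (auto simp: un2_le h_nonneg mult_left_mono)

definition "Bd = sqrt (\<Sum>\<^sub>\<infinity>x. (u x)^2)"

lemma u_bound: "\<bar>u x\<bar> \<le> Bd"
proof -
  have "(u x)^2 \<le> (\<Sum>\<^sub>\<infinity>x. (u x)^2)" by (rule le_infsum_pt[OF S_u2]) auto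
  then have "sqrt ((u x)^2) \<le> Bd" unfolding Bd_def by (rule real_sqrt_le_mono)
  then show ?thesis by simp
qed

lemma Bd_nonneg: "0 \<le> Bd" using u_bound[of 0] by linarith

lemma powr_bound: assumes "\<bar>v\<bar> \<le> Bd" shows "\<bar>v\<bar> powr p \<le> Bd powr (p - 2) * v^2"
proof -
  have "\<bar>v\<bar> powr p = \<bar>v\<bar> powr (p - 2) * v^2" using abs_powr_sq[of v p] by (simp add: power2_eq_square mult.assoc)
  also have "\<dots> \<le> Bd powr (p - 2) * v^2" using assms p by (intro mult_right_mono powr_mono2) auto
  finally show ?thesis .
qed

lemma S_fp: "fp summable_on UNIV"
proof (rule summable_nonneg_le[of "\<lambda>x. Bd powr (p - 2) * (up x)^2"])
  show "(\<lambda>x. Bd powr (p - 2) * (up x)^2) summable_on UNIV" using S_up2 by (rule summable_on_cmult_right)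
  show "0 \<le> fp x" for x unfolding fp_def by simp
  have "\<bar>up x\<bar> \<le> Bd" for x using u_bound[of x] Bd_nonneg unfolding posp_def by (auto simp: max_def abs_le_iff)
  then show "fp x \<le> Bd powr (p - 2) * (up x)^2" for x unfolding fp_def by (rule powr_bound)
qed

lemma S_fn: "fn summable_on UNIV"
proof (rule summable_nonneg_le[of "\<lambda>x. Bd powr (p - 2) * (un x)^2"])
  show "(\<lambda>x. Bd powr (p - 2) * (un x)^2) summable_on UNIV" using S_un2 by (rule summable_on_cmult_right)
  show "0 \<le> fn x" for x unfolding fn_def by simp
  have "\<bar>un x\<bar> \<le> Bd" for x using u_bound[of x] Bd_nonneg unfolding negp_def by (auto simp: min_def abs_le_iff)
  then show "fn x \<le> Bd powr (p - 2) * (un x)^2" for x unfolding fn_def by (rule powr_bound)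
qed

definition "cg1 = (\<Sum>\<^sub>\<infinity>x. grad_sq up x)"
definition "cg12 = (\<Sum>\<^sub>\<infinity>x. gam up un x)"
definition "cg2 = (\<Sum>\<^sub>\<infinity>x. grad_sq un x)"
definition "cQ1 = (\<Sum>\<^sub>\<infinity>x. h x * (up x)^2)"
definition "cQ2 = (\<Sum>\<^sub>\<infinity>x. h x * (un x)^2)"
definition "cA = BB \<alpha> fp fp"
definition "cC = BB \<alpha> fp fn"
definition "cD = BB \<alpha> fn fn"

lemma cC_sym: "BB \<alpha> fn fp = cC" unfolding cC_def by (rule BB_sym[OF \<alpha>1 \<alpha>2 S_fn S_fp])

definition W :: "real \<Rightarrow> real \<Rightarrow> pt \<Rightarrow> real" where "W s t = (\<lambda>x. s * up x + t * un x)"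

lemma W_sq: "(W s t x)^2 = s^2 * (up x)^2 + t^2 * (un x)^2"
proof -
  have "up x * un x = 0" by (rule posp_negp_mult)
  then show ?thesis unfolding W_def by (simp add: power2_eq_square algebra_simps)
qed

lemma sum_gsq_W: "(\<Sum>\<^sub>\<infinity>x. grad_sq (W s t) x) = GG cg1 cg12 cg2 s t"
  and S_gsq_W: "grad_sq (W s t) summable_on UNIV"
proof -
  have e: "grad_sq (W s t) = (\<lambda>x. s^2 * grad_sq up x + (2 * s * t) * gam up un x + t^2 * grad_sq un x)"
    unfolding W_def by (rule ext) (simp add: gsq_comb)
  show "(\<Sum>\<^sub>\<infinity>x. grad_sq (W s t) x) = GG cg1 cg12 cg2 s t"
    unfolding e infsum_lin3(1)[OF S_gp S_gam S_gn] GG_def cg1_def cg12_def cg2_def by (simp add: algebra_simps)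
  show "grad_sq (W s t) summable_on UNIV" unfolding e by (rule infsum_lin3(2)[OF S_gp S_gam S_gn])
qed

lemma Hnorm_W: "Hnorm_sq a h (W s t) = a * GG cg1 cg12 cg2 s t + cQ1 * s^2 + cQ2 * t^2"
proof -
  have e: "(\<lambda>x. a * grad_sq (W s t) x + h x * (W s t x)^2) = (\<lambda>x. (a * s^2) * grad_sq up x + (a * (2 * s * t)) * gam up un x
      + (a * t^2) * grad_sq un x + s^2 * (h x * (up x)^2) + t^2 * (h x * (un x)^2))"
    unfolding W_sq by (rule ext) (simp add: W_def gsq_comb algebra_simps)
  show ?thesis unfolding Hnorm_sq_def e infsum_lin5(1)[OF S_gp S_gam S_gn S_hup S_hun]
    unfolding GG_def cg1_def cg12_def cg2_def cQ1_def cQ2_def by (simp add: algebra_simps)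
qed

lemma W_powr: "0 \<le> s \<Longrightarrow> 0 \<le> t \<Longrightarrow> (\<lambda>y. \<bar>W s t y\<bar> powr p) = (\<lambda>y. s powr p * fp y + t powr p * fn y)"
  unfolding W_def fp_def fn_def posp_def negp_def by (rule ext) (rule pw_abs_powr)

lemma BB_F: "BB \<alpha> (\<lambda>x. X * fp x + Y * fn x) (\<lambda>x. X' * fp x + Y' * fn x)
   = X * X' * cA + X * Y' * cC + Y * X' * cC + Y * Y' * cD"
  unfolding BB_bilin[OF \<alpha>1 \<alpha>2 S_fp S_fn] cC_sym unfolding cA_def cD_def cC_def by simp

lemma Jfun_W:
  assumes "0 \<le> s" "0 \<le> t"
  shows "Jfun a b h \<alpha> p (W s t) = ff a b p cg1 cg12 cg2 cQ1 cQ2 cA cC cD s t"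
proof -
  have "(\<Sum>\<^sub>\<infinity>x. Rconv \<alpha> (\<lambda>y. \<bar>W s t y\<bar> powr p) x * \<bar>W s t x\<bar> powr p)
      = BB \<alpha> (\<lambda>x. s powr p * fp x + t powr p * fn x) (\<lambda>x. s powr p * fp x + t powr p * fn x)"
    unfolding BB_def W_powr[OF assms] by (metis W_powr[OF assms])
  also have "\<dots> = cA * (s powr p)^2 + 2 * cC * (s powr p * t powr p) + cD * (t powr p)^2"
    unfolding BB_F by (simp add: power2_eq_square algebra_simps)
  finally have N: "(\<Sum>\<^sub>\<infinity>x. Rconv \<alpha> (\<lambda>y. \<bar>W s t y\<bar> powr p) x * \<bar>W s t x\<bar> powr p)
      = cA * (s powr p)^2 + 2 * cC * (s powr p * t powr p) + cD * (t powr p)^2" .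
  show ?thesis unfolding Jfun_def Hnorm_W sum_gsq_W N ff_def by (simp add: algebra_simps)
qed

lemma posp_W: "0 \<le> s \<Longrightarrow> 0 \<le> t \<Longrightarrow> posp (W s t) = (\<lambda>x. s * up x)"
  unfolding W_def posp_def negp_def by (rule ext) (rule pw_posp)

lemma negp_W: "0 \<le> s \<Longrightarrow> 0 \<le> t \<Longrightarrow> negp (W s t) = (\<lambda>x. t * un x)"
  unfolding W_def posp_def negp_def by (rule ext) (rule pw_negp)

lemma Jder_pos:
  assumes "0 \<le> s" "0 \<le> t"
  shows "Jder a b h \<alpha> p (W s t) (posp (W s t)) = EE a b p cg1 cg12 cg2 cQ1 cQ2 cA cC cD s t"
proof -
  have gi: "grad_inner (W s t) (\<lambda>x. s * up x) = cg1 * s^2 + cg12 * (s * t)"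
  proof -
    have e: "gam (W s t) (\<lambda>x. s * up x) = (\<lambda>x. s^2 * grad_sq up x + (s * t) * gam up un x)"
      unfolding W_def by (rule ext) (rule gam_comb1)
    show ?thesis unfolding grad_inner_gam e infsum_lin2(1)[OF S_gp S_gam] cg1_def cg12_def by (simp add: algebra_simps)
  qed
  have hterm: "(\<Sum>\<^sub>\<infinity>x. h x * W s t x * (s * up x)) = cQ1 * s^2"
  proof -
    have e: "(\<lambda>x. h x * W s t x * (s * up x)) = (\<lambda>x. s^2 * (h x * (up x)^2))"
    proof
      fix x
      have "up x * un x = 0" by (rule posp_negp_mult)
      then show "h x * W s t x * (s * up x) = s^2 * (h x * (up x)^2)"
        unfolding W_def by (simp add: power2_eq_square algebra_simps)
    qed
    show ?thesis unfolding e cQ1_def by (simp add: infsum_cmult_right' mult.commute)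
  qed
  have nl: "(\<Sum>\<^sub>\<infinity>x. Rconv \<alpha> (\<lambda>y. \<bar>W s t y\<bar> powr p) x * \<bar>W s t x\<bar> powr (p - 2) * W s t x * (s * up x))
       = cA * (s powr p)^2 + cC * (s powr p * t powr p)"
  proof -
    have e: "\<bar>W s t x\<bar> powr (p - 2) * W s t x * (s * up x) = s powr p * fp x" for x
      unfolding W_def fp_def posp_def negp_def using pw_der1[OF assms] by simp
    have "(\<Sum>\<^sub>\<infinity>x. Rconv \<alpha> (\<lambda>y. \<bar>W s t y\<bar> powr p) x * \<bar>W s t x\<bar> powr (p - 2) * W s t x * (s * up x))
       = BB \<alpha> (\<lambda>x. s powr p * fp x + 0 * fn x) (\<lambda>x. s powr p * fp x + t powr p * fn x)"
      unfolding BB_def W_powr[OF assms] by (rule infsum_cong) (simp add: e[symmetric] mult.assoc W_powr[OF assms])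
    also have "\<dots> = cA * (s powr p)^2 + cC * (s powr p * t powr p)"
      unfolding BB_F by (simp add: power2_eq_square algebra_simps)
    finally show ?thesis .
  qed
  show ?thesis unfolding Jder_def posp_W[OF assms] gi hterm nl sum_gsq_W EE_def by (simp add: algebra_simps)
qed

lemma Jder_neg:
  assumes "0 \<le> s" "0 \<le> t"
  shows "Jder a b h \<alpha> p (W s t) (negp (W s t)) = EE a b p cg2 cg12 cg1 cQ2 cQ1 cD cC cA t s"
proof -
  have gi: "grad_inner (W s t) (\<lambda>x. t * un x) = cg2 * t^2 + cg12 * (t * s)"
  proof -
    have e: "gam (W s t) (\<lambda>x. t * un x) = (\<lambda>x. t^2 * grad_sq un x + (s * t) * gam up un x)"
      unfolding W_def by (rule ext) (rule gam_comb2)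
    show ?thesis unfolding grad_inner_gam e infsum_lin2(1)[OF S_gn S_gam] cg2_def cg12_def by (simp add: algebra_simps)
  qed
  have hterm: "(\<Sum>\<^sub>\<infinity>x. h x * W s t x * (t * un x)) = cQ2 * t^2"
  proof -
    have e: "(\<lambda>x. h x * W s t x * (t * un x)) = (\<lambda>x. t^2 * (h x * (un x)^2))"
    proof
      fix x
      have "up x * un x = 0" by (rule posp_negp_mult)
      then show "h x * W s t x * (t * un x) = t^2 * (h x * (un x)^2)"
        unfolding W_def by (simp add: power2_eq_square algebra_simps)
    qed
    show ?thesis unfolding e cQ2_def by (simp add: infsum_cmult_right' mult.commute)
  qed
  have nl: "(\<Sum>\<^sub>\<infinity>x. Rconv \<alpha> (\<lambda>y. \<bar>W s t y\<bar> powr p) x * \<bar>W s t x\<bar> powr (p - 2) * W s t x * (t * un x))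
       = cD * (t powr p)^2 + cC * (t powr p * s powr p)"
  proof -
    have e: "\<bar>W s t x\<bar> powr (p - 2) * W s t x * (t * un x) = t powr p * fn x" for x
      unfolding W_def fn_def posp_def negp_def using pw_der2[OF assms] by simp
    have "(\<Sum>\<^sub>\<infinity>x. Rconv \<alpha> (\<lambda>y. \<bar>W s t y\<bar> powr p) x * \<bar>W s t x\<bar> powr (p - 2) * W s t x * (t * un x))
       = BB \<alpha> (\<lambda>x. 0 * fp x + t powr p * fn x) (\<lambda>x. s powr p * fp x + t powr p * fn x)"
      unfolding BB_def W_powr[OF assms] by (rule infsum_cong) (simp add: e[symmetric] mult.assoc W_powr[OF assms])
    also have "\<dots> = cD * (t powr p)^2 + cC * (t powr p * s powr p)"
      unfolding BB_F by (simp add: power2_eq_square algebra_simps)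
    finally show ?thesis .
  qed
  show ?thesis unfolding Jder_def negp_W[OF assms] gi hterm nl sum_gsq_W EE_def GG_swap[of cg1 cg12 cg2 s t]
    by (simp add: algebra_simps)
qed

lemma W_Hsp: "W s t \<in> Hsp h"
proof -
  have e1: "(\<lambda>x. grad_sq (W s t) x + (W s t x)^2) = (\<lambda>x. s^2 * grad_sq up x + (2 * s * t) * gam up un x
      + t^2 * grad_sq un x + s^2 * (up x)^2 + t^2 * (un x)^2)"
    unfolding W_sq by (rule ext) (simp add: W_def gsq_comb algebra_simps)
  have e2: "(\<lambda>x. h x * (W s t x)^2) = (\<lambda>x. s^2 * (h x * (up x)^2) + t^2 * (h x * (un x)^2))"
    unfolding W_sq by (rule ext) (simp add: algebra_simps)
  show ?thesis unfolding Hsp_def H1_def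
    using infsum_lin5(2)[OF S_gp S_gam S_gn S_up2 S_un2, of "s^2" "2 * s * t" "t^2" "s^2" "t^2"]
      infsum_lin2(2)[OF S_hup S_hun, of "s^2" "t^2"]
    by (simp add: e1 e2)
qed

lemma ex_up: "\<exists>x. up x \<noteq> 0"
proof (rule ccontr)
  assume "\<not> (\<exists>x. up x \<noteq> 0)" then have "up = (\<lambda>_. 0)" by auto
  then show False using upz by simp
qed

lemma ex_un: "\<exists>x. un x \<noteq> 0"
proof (rule ccontr)
  assume "\<not> (\<exists>x. un x \<noteq> 0)" then have "un = (\<lambda>_. 0)" by auto
  then show False using unz by simp
qed

lemma cQ1_pos: "cQ1 > 0"
proof -
  obtain x1 where x1: "up x1 \<noteq> 0" using ex_up by blast
  have "h x1 * (up x1)^2 > 0" using x1 hh h0 by (metis less_le_trans mult_pos_pos zero_less_power2)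
  then show ?thesis unfolding cQ1_def
    by (intro infsum_pos_pt[OF S_hup]) (auto simp: h_nonneg)
qed

lemma cQ2_pos: "cQ2 > 0"
proof -
  obtain x1 where x1: "un x1 \<noteq> 0" using ex_un by blast
  have "h x1 * (un x1)^2 > 0" using x1 hh h0 by (metis less_le_trans mult_pos_pos zero_less_power2)
  then show ?thesis unfolding cQ2_def
    by (intro infsum_pos_pt[OF S_hun]) (auto simp: h_nonneg)
qed

lemma fp_nz: "fp \<noteq> (\<lambda>_. 0)"
proof -
  obtain x1 where x1: "up x1 \<noteq> 0" using ex_up by blast
  then have "fp x1 \<noteq> 0" unfolding fp_def by simp
  then show ?thesis by auto
qed

lemma fn_nz: "fn \<noteq> (\<lambda>_. 0)"
proof -
  obtain x1 where x1: "un x1 \<noteq> 0" using ex_un by blast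
  then have "fn x1 \<noteq> 0" unfolding fn_def by simp
  then show ?thesis by auto
qed

lemma cA_pos: "cA > 0" unfolding cA_def by (rule BB_pos[OF \<alpha>1 \<alpha>2 S_fp fp_nz])
lemma cD_pos: "cD > 0" unfolding cD_def by (rule BB_pos[OF \<alpha>1 \<alpha>2 S_fn fn_nz])

lemma cACD: "cC * cC < cA * cD"
proof -
  define \<phi> where "\<phi> = (\<lambda>x. cC * fp x + (- cA) * fn x)"
  have phs: "\<phi> summable_on UNIV" unfolding \<phi>_def using S_fp S_fn by (intro summable_on_add summable_on_cmult_right)
  have "\<phi> \<noteq> (\<lambda>_. 0)"
  proof -
    obtain x2 where x2: "un x2 \<noteq> 0" using ex_un by blast
    have "up x2 * un x2 = 0" by (rule posp_negp_mult)
    then have "up x2 = 0" using x2 by simp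
    then have "\<phi> x2 = - cA * fn x2" unfolding \<phi>_def fp_def by simp
    moreover have "fn x2 \<noteq> 0" using x2 unfolding fn_def by simp
    ultimately have "\<phi> x2 \<noteq> 0" using cA_pos by simp
    then show ?thesis by auto
  qed
  then have "BB \<alpha> \<phi> \<phi> > 0" by (rule BB_pos[OF \<alpha>1 \<alpha>2 phs])
  moreover have "BB \<alpha> \<phi> \<phi> = cA * (cA * cD - cC * cC)" unfolding \<phi>_def BB_F by (simp add: algebra_simps)
  ultimately have "cA * (cA * cD - cC * cC) > 0" by simp
  then have "cA * cD - cC * cC > 0" using cA_pos by (simp add: zero_less_mult_iff)
  then show ?thesis by simp
qed

lemma twoD_inst: "twoD a b p cg1 cg12 cg2 cQ1 cQ2 cA cC cD"
proof
  show "a > 0" "b > 0" "p > 4" using a b p by auto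
  show "cg1 \<ge> 0" unfolding cg1_def by (rule infsum_nonneg) (simp add: gsq_nonneg)
  show "cg12 \<ge> 0" unfolding cg12_def by (rule infsum_nonneg) (simp add: gam_pn_nonneg)
  show "cg2 \<ge> 0" unfolding cg2_def by (rule infsum_nonneg) (simp add: gsq_nonneg)
  show "cQ1 > 0" "cQ2 > 0" "cA > 0" "cD > 0" "cC * cC < cA * cD" by (rule cQ1_pos cQ2_pos cA_pos cD_pos cACD)+
qed

lemma up_nz_W: "s > 0 \<Longrightarrow> t > 0 \<Longrightarrow> posp (W s t) \<noteq> (\<lambda>_. 0)"
proof -
  assume st: "s > 0" "t > 0"
  obtain x1 where x1: "up x1 \<noteq> 0" using ex_up by blast
  have "posp (W s t) x1 \<noteq> 0" using posp_W[of s t] st x1 by simp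
  then show ?thesis by auto
qed

lemma un_nz_W: "s > 0 \<Longrightarrow> t > 0 \<Longrightarrow> negp (W s t) \<noteq> (\<lambda>_. 0)"
proof -
  assume st: "s > 0" "t > 0"
  obtain x1 where x1: "un x1 \<noteq> 0" using ex_un by blast
  have "negp (W s t) x1 \<noteq> 0" using negp_W[of s t] st x1 by simp
  then show ?thesis by auto
qed

lemma key:
  "(s > 0 \<and> t > 0 \<and> W s t \<in> Nehari_sc a b h \<alpha> p
     \<and> (\<forall>s' t'. s' \<ge> 0 \<longrightarrow> t' \<ge> 0 \<longrightarrow> Jfun a b h \<alpha> p (W s' t') \<le> Jfun a b h \<alpha> p (W s t)))
   \<longleftrightarrow> (s > 0 \<and> t > 0 \<and> EE a b p cg1 cg12 cg2 cQ1 cQ2 cA cC cD s t = 0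
     \<and> EE a b p cg2 cg12 cg1 cQ2 cQ1 cD cC cA t s = 0
     \<and> (\<forall>s' t'. 0 \<le> s' \<longrightarrow> 0 \<le> t' \<longrightarrow> ff a b p cg1 cg12 cg2 cQ1 cQ2 cA cC cD s' t' \<le> ff a b p cg1 cg12 cg2 cQ1 cQ2 cA cC cD s t))"
proof (cases "s > 0 \<and> t > 0")
  case True
  then have st: "0 \<le> s" "0 \<le> t" by auto
  have m: "W s t \<in> Nehari_sc a b h \<alpha> p \<longleftrightarrow>
     EE a b p cg1 cg12 cg2 cQ1 cQ2 cA cC cD s t = 0 \<and> EE a b p cg2 cg12 cg1 cQ2 cQ1 cD cC cA t s = 0"
    unfolding Nehari_sc_def using W_Hsp up_nz_W un_nz_W True Jder_pos[OF st] Jder_neg[OF st] by auto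
  have j: "(\<forall>s' t'. s' \<ge> 0 \<longrightarrow> t' \<ge> 0 \<longrightarrow> Jfun a b h \<alpha> p (W s' t') \<le> Jfun a b h \<alpha> p (W s t))
      \<longleftrightarrow> (\<forall>s' t'. 0 \<le> s' \<longrightarrow> 0 \<le> t' \<longrightarrow> ff a b p cg1 cg12 cg2 cQ1 cQ2 cA cC cD s' t' \<le> ff a b p cg1 cg12 cg2 cQ1 cQ2 cA cC cD s t)"
    using Jfun_W st by auto
  show ?thesis using m j True by blast
next
  case False then show ?thesis by blast
qed

end

theorem lemma4p1:
  fixes a b \<alpha> p h0 :: real and h u :: "pt \<Rightarrow> real"
  assumes "a > 0" and "b > 0" and "0 < \<alpha>" and "\<alpha> < 3" and "p > 4"
    and "h0 > 0" and "\<forall>x. h x \<ge> h0"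
    and "u \<in> Hsp h" and "posp u \<noteq> (\<lambda>_. 0)" and "negp u \<noteq> (\<lambda>_. 0)"
  shows "\<exists>!(s, t). s > 0 \<and> t > 0
           \<and> (\<lambda>x. s * posp u x + t * negp u x) \<in> Nehari_sc a b h \<alpha> p
           \<and> (\<forall>s' t'. s' \<ge> 0 \<longrightarrow> t' \<ge> 0 \<longrightarrow>
                Jfun a b h \<alpha> p (\<lambda>x. s' * posp u x + t' * negp u x)
                \<le> Jfun a b h \<alpha> p (\<lambda>x. s * posp u x + t * negp u x))"
proof -
  interpret S: setting a b \<alpha> p h0 h u using assms by unfold_locales auto
  interpret T: twoD a b p S.cg1 S.cg12 S.cg2 S.cQ1 S.cQ2 S.cA S.cC S.cD by (rule S.twoD_inst)
  have Wd: "(\<lambda>x. s * posp u x + t * negp u x) = S.W s t" for s t unfolding S.W_def ..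
  show ?thesis unfolding Wd S.key using T.main2D .
qed


end
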